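(* Let $m,n\geqslant1$, $N\geqslant1$ and $(\mu,\nu)\in\Lambda_{m,n}(N)$. For every tensor $T\in V^{m,n}$ lying in the $GL(N)$-isotypic component of type $U^{(\mu,\nu)}$, $$\mathscr{C}_{m,n}(T)=\big(c(\mu)+c(\nu)+N|\nu|\big)T.$$
   Context: $V$ is an $N$-dimensional complex vector space with basis $\{e_i\}$, dual basis $\{e^i\}$; $V^{m,n}=V^{\otimes m}\otimes V^{*\otimes n}$ with the diagonal $GL(N)$-action (contragredient on $V^*$). $\tau_{ab}$ ($1\leqslant a<b\leqslant m$) swaps the $a$-th and $b$-th $V$-factors, $\tau_{a'b'}$ swaps $V^*$-factors; $\mathscr{L}_m=\sum_{a<b}\tau_{ab}$ (zero if $m<2$), $\mathscr{R}_n=\sum_{a'<b'}\tau_{a'b'}$ (zero if $n<2$). $\tau_{ab'}$ contracts the $a$-th $V$-factor with the $b'$-th $V^*$-factor and inserts $\sum_ke_k\otimes e^k$ in these positions; $\mathscr{A}_{m,n}=\sum_{a,b'}\tau_{ab'}$ and $\mathscr{C}_{m,n}=\mathscr{L}_m+\mathscr{R}_n-\mathscr{A}_{m,n}+Nn$. For a partition $\alpha$, $|\alpha|$ is its size and its content is $c(\alpha)=\sum_{(i,j)\in\alpha}(j-i)$ over boxes (row $i$, column $j$) of its Young diagram. $\Lambda_{m,n}(N)=\bigcup_{r=0}^{\min(m,n)}\Lambda^{(r)}_{m,n}(N)$ where $\Lambda^{(r)}_{m,n}(N)$ is the set of pairs of partitions $(\mu,\nu)$ with $m-|\mu|=n-|\nu|=r$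 and $\ell(\mu)+\ell(\nu)\leqslant N$. $U^{(\mu,\nu)}$ is the irreducible rational representation of $GL(N)$ with highest weight $(\mu_1,\dots,\mu_{\ell(\mu)},0,\dots,0,-\nu_{\ell(\nu)},\dots,-\nu_1)$. The isotypic component of type $U^{(\mu,\nu)}$ is the sum of all $GL(N)$-subrepresentations of $V^{m,n}$ isomorphic to $U^{(\mu,\nu)}$. *)

theory Defs
  imports Complex_Main
begin

text \<open>V = C^N with basis e_0..e_(N-1). A tensor in V^{m,n} is represented by its
coefficient function T I J (coefficient of e_I (x) e^J), I, J index lists;
it vanishes off valid multi-indices.\<close>

definition idx :: "nat \<Rightarrow> nat \<Rightarrow> nat list set" where
  "idx N k = {I. length I = k \<and> set I \<subseteq> {..<N}}"

type_synonym tensor = "nat list \<Rightarrow> nat list \<Rightarrow> complex"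

definition tens :: "nat \<Rightarrow> nat \<Rightarrow> nat \<Rightarrow> tensor set" where
  "tens N m n = {T. \<forall>I J. \<not> (I \<in> idx N m \<and> J \<in> idx N n) \<longrightarrow> T I J = 0}"

definition GL :: "nat \<Rightarrow> ((nat \<Rightarrow> nat \<Rightarrow> complex) \<times> (nat \<Rightarrow> nat \<Rightarrow> complex)) set" where
  "GL N = {(g, h). (\<forall>i<N. \<forall>j<N. (\<Sum>k<N. g i k * h k j) = (if i = j then 1 else 0))
                 \<and> (\<forall>i<N. \<forall>j<N. (\<Sum>k<N. h i k * g k j) = (if i = j then 1 else 0))}"

text \<open>Diagonal action: g on V-factors, contragredient (via h = g^{-1}) on V*-factors.\<close>
definition act :: "nat \<Rightarrow> nat \<Rightarrow> nat \<Rightarrow> (nat \<Rightarrow> nat \<Rightarrow> complex) \<times> (nat \<Rightarrow> nat \<Rightarrow> complex)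
    \<Rightarrow> tensor \<Rightarrow> tensor" where
  "act N m n gh T = (\<lambda>I J. if I \<in> idx N m \<and> J \<in> idx N n then
      (\<Sum>I'\<in>idx N m. \<Sum>J'\<in>idx N n.
         (\<Prod>a<m. fst gh (I ! a) (I' ! a)) * T I' J' * (\<Prod>b<n. snd gh (J' ! b) (J ! b)))
    else 0)"

definition subspace_t :: "nat \<Rightarrow> nat \<Rightarrow> nat \<Rightarrow> tensor set \<Rightarrow> bool" where
  "subspace_t N m n W \<longleftrightarrow> W \<subseteq> tens N m n \<and> (\<lambda>I J. 0) \<in> W
     \<and> (\<forall>S\<in>W. \<forall>T\<in>W. (\<lambda>I J. S I J + T I J) \<in> W)
     \<and> (\<forall>c. \<forall>T\<in>W. (\<lambda>I J. c * T I J) \<in> W)"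

definition subrep :: "nat \<Rightarrow> nat \<Rightarrow> nat \<Rightarrow> tensor set \<Rightarrow> bool" where
  "subrep N m n W \<longleftrightarrow> subspace_t N m n W \<and> (\<forall>gh\<in>GL N. \<forall>T\<in>W. act N m n gh T \<in> W)"

definition irred_subrep :: "nat \<Rightarrow> nat \<Rightarrow> nat \<Rightarrow> tensor set \<Rightarrow> bool" where
  "irred_subrep N m n W \<longleftrightarrow> subrep N m n W \<and> W \<noteq> {\<lambda>I J. 0}
     \<and> (\<forall>W'. subrep N m n W' \<and> W' \<subseteq> W \<longrightarrow> W' = {\<lambda>I J. 0} \<or> W' = W)"

definition hw_vector :: "nat \<Rightarrow> nat \<Rightarrow> nat \<Rightarrow> (nat \<Rightarrow> int) \<Rightarrow> tensor \<Rightarrow> bool" where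
  "hw_vector N m n lam v \<longleftrightarrow> v \<noteq> (\<lambda>I J. 0)
     \<and> (\<forall>(g, h)\<in>GL N. (\<forall>i<N. \<forall>j<N. i \<noteq> j \<longrightarrow> g i j = 0) \<longrightarrow>
          act N m n (g, h) v = (\<lambda>I J. (\<Prod>i<N. g i i powi lam i) * v I J))
     \<and> (\<forall>(g, h)\<in>GL N. (\<forall>i<N. g i i = 1) \<and> (\<forall>i<N. \<forall>j<N. j < i \<longrightarrow> g i j = 0) \<longrightarrow>
          act N m n (g, h) v = v)"

definition is_partition :: "nat list \<Rightarrow> bool" where
  "is_partition \<mu> \<longleftrightarrow> (\<forall>x\<in>set \<mu>. 0 < x) \<and> sorted_wrt (\<ge>) \<mu>"

text \<open>Highest weight (mu_1,...,mu_l,0,...,0,-nu_l',...,-nu_1), 0-based positions.\<close>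
definition hw :: "nat \<Rightarrow> nat list \<Rightarrow> nat list \<Rightarrow> nat \<Rightarrow> int" where
  "hw N \<mu> \<nu> i = (if i < length \<mu> then int (\<mu> ! i)
                 else if N - 1 - i < length \<nu> then - int (\<nu> ! (N - 1 - i)) else 0)"

text \<open>W is a subrepresentation isomorphic to U^(mu,nu).\<close>
definition of_type :: "nat \<Rightarrow> nat \<Rightarrow> nat \<Rightarrow> nat list \<Rightarrow> nat list \<Rightarrow> tensor set \<Rightarrow> bool" where
  "of_type N m n \<mu> \<nu> W \<longleftrightarrow> irred_subrep N m n W \<and> (\<exists>v\<in>W. hw_vector N m n (hw N \<mu> \<nu>) v)"

definition isotypic :: "nat \<Rightarrow> nat \<Rightarrow> nat \<Rightarrow> nat list \<Rightarrow> nat list \<Rightarrow> tensor set" where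
  "isotypic N m n \<mu> \<nu> = {T. \<exists>(k::nat) (Ts::nat \<Rightarrow> tensor). (\<forall>i<k. \<exists>W. of_type N m n \<mu> \<nu> W \<and> Ts i \<in> W)
        \<and> T = (\<lambda>I J. \<Sum>i<k. Ts i I J)}"

definition Lambda :: "nat \<Rightarrow> nat \<Rightarrow> nat \<Rightarrow> (nat list \<times> nat list) set" where
  "Lambda m n N = {(\<mu>, \<nu>). is_partition \<mu> \<and> is_partition \<nu> \<and>
      (\<exists>r\<le>min m n. m = sum_list \<mu> + r \<and> n = sum_list \<nu> + r) \<and> length \<mu> + length \<nu> \<le> N}"

definition content :: "nat list \<Rightarrow> int" where
  "content \<mu> = (\<Sum>i<length \<mu>. \<Sum>j<\<mu> ! i. int j - int i)"

definition swap_at :: "nat list \<Rightarrow> nat \<Rightarrow> nat \<Rightarrow> nat list" where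
  "swap_at I a b = I[a := I ! b, b := I ! a]"

definition Lop :: "nat \<Rightarrow> tensor \<Rightarrow> tensor" where
  "Lop m T = (\<lambda>I J. \<Sum>b<m. \<Sum>a<b. T (swap_at I a b) J)"

definition Rop :: "nat \<Rightarrow> tensor \<Rightarrow> tensor" where
  "Rop n T = (\<lambda>I J. \<Sum>b<n. \<Sum>a<b. T I (swap_at J a b))"

text \<open>tau_{ab'}: contract a-th V with b'-th V*, insert sum_k e_k (x) e^k.\<close>
definition contr :: "nat \<Rightarrow> nat \<Rightarrow> nat \<Rightarrow> nat \<Rightarrow> nat \<Rightarrow> tensor \<Rightarrow> tensor" where
  "contr N m n a b T = (\<lambda>I J. if I \<in> idx N m \<and> J \<in> idx N n \<and> I ! a = J ! b
      then (\<Sum>l<N. T (I[a := l]) (J[b := l])) else 0)"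

definition Aop :: "nat \<Rightarrow> nat \<Rightarrow> nat \<Rightarrow> tensor \<Rightarrow> tensor" where
  "Aop N m n T = (\<lambda>I J. \<Sum>a<m. \<Sum>b<n. contr N m n a b T I J)"

definition Cop :: "nat \<Rightarrow> nat \<Rightarrow> nat \<Rightarrow> tensor \<Rightarrow> tensor" where
  "Cop N m n T = (\<lambda>I J. Lop m T I J + Rop n T I J - Aop N m n T I J + of_nat (N * n) * T I J)"

end

theory Submission
  imports Defs
begin

lemma finite_idx[simp]: "finite (idx N m)"
proof -
  have "idx N m = {xs. set xs \<subseteq> {..<N} \<and> length xs = m}" by (auto simp: idx_def)
  thus ?thesis by (simp add: finite_lists_length_eq)
qed

lemma idx_upd[intro]: "I \<in> idx N m \<Longrightarrow> k < N \<Longrightarrow> I[a := k] \<in> idx N m"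
  unfolding idx_def by (auto dest: subsetD[OF set_update_subset_insert])

lemma idx_nth: "I \<in> idx N m \<Longrightarrow> a < m \<Longrightarrow> I ! a < N"
proof -
  assume a: "I \<in> idx N m" "a < m"
  hence "I ! a \<in> set I" by (simp add: idx_def)
  moreover have "set I \<subseteq> {..<N}" using a by (simp add: idx_def)
  ultimately show ?thesis by auto
qed

lemma idx_len: "I \<in> idx N m \<Longrightarrow> length I = m"
  unfolding idx_def by auto

lemma swap_at_idx[intro]: "I \<in> idx N m \<Longrightarrow> a < m \<Longrightarrow> b < m \<Longrightarrow> swap_at I a b \<in> idx N m"
  unfolding swap_at_def by (intro idx_upd) (auto intro: idx_nth)

lemma prod_ind: "finite A \<Longrightarrow> (\<Prod>c\<in>A. if P c then (1::complex) else 0) = (if \<forall>c\<in>A. P c then 1 else 0)"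
  by (induction A rule: finite_induct) auto

lemma list_eq_idx: "length I' = m \<Longrightarrow> length K = m \<Longrightarrow> (I' = K) = (\<forall>c<m. I' ! c = K ! c)"
  by (auto simp: list_eq_iff_nth_eq)

lemma prod_delta_eq:
  assumes "I' \<in> idx N m" "I \<in> idx N m"
  shows "(\<Prod>c<m. if I ! c = I' ! c then (1::complex) else 0) = (if I' = I then 1 else 0)"
  using assms by (simp add: prod_ind list_eq_idx idx_len)

lemma prod_delta_upd:
  assumes "I' \<in> idx N m" "I \<in> idx N m" "a < m"
  shows "(if I' ! a = k then (1::complex) else 0) * (\<Prod>c\<in>{..<m}-{a}. if I ! c = I' ! c then 1 else 0)
     = (if I' = I[a := k] then 1 else 0)"
proof -
  have "(I' = I[a := k]) = (I' ! a = k \<and> (\<forall>c\<in>{..<m}-{a}. I ! c = I' ! c))"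
    using assms by (auto simp: list_eq_idx idx_len nth_list_update)
  thus ?thesis by (simp add: prod_ind)
qed

lemma sum_idx_delta:
  assumes "K \<in> idx N m"
  shows "(\<Sum>I'\<in>idx N m. (if I' = K then (1::complex) else 0) * F I') = F K"
proof -
  have "(\<Sum>I'\<in>idx N m. (if I' = K then (1::complex) else 0) * F I') = (\<Sum>I'\<in>idx N m. if I' = K then F I' else 0)"
    by (rule sum.cong) auto
  thus ?thesis using assms by simp
qed

lemma sum_idx_split:
  assumes "a < m" "0 < N"
  shows "(\<Sum>I\<in>idx N m. F I) = (\<Sum>I\<in>{I\<in>idx N m. I ! a = 0}. \<Sum>k<N. F (I[a := k]))"
proof -
  have bij: "bij_betw (\<lambda>(I, k). I[a := k]) ({I\<in>idx N m. I ! a = 0} \<times> {..<N}) (idx N m)"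
    apply (rule bij_betw_byWitness[where f' = "\<lambda>I. (I[a := 0], I ! a)"])
    using assms apply (auto simp: idx_len intro: idx_nth)
    by (metis list_update_id)
  have "(\<Sum>I\<in>idx N m. F I) = (\<Sum>x\<in>{I\<in>idx N m. I ! a = 0} \<times> {..<N}. F ((\<lambda>(I, k). I[a := k]) x))"
    using sum.reindex_bij_betw[OF bij, of F] by simp
  also have "\<dots> = (\<Sum>I\<in>{I\<in>idx N m. I ! a = 0}. \<Sum>k<N. F (I[a := k]))"
    by (simp add: sum.cartesian_product prod.case_distrib)
  finally show ?thesis .
qed

definition dlt :: "nat \<Rightarrow> nat \<Rightarrow> complex" where
  "dlt p q = (if p = q then 1 else 0)"

definition unipG :: "nat \<Rightarrow> nat \<Rightarrow> complex \<Rightarrow> nat \<Rightarrow> nat \<Rightarrow> complex" where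
  "unipG i j t = (\<lambda>p q. dlt p q + t * (if p = i \<and> q = j then 1 else 0))"

definition diagG :: "nat \<Rightarrow> complex \<Rightarrow> nat \<Rightarrow> nat \<Rightarrow> complex" where
  "diagG i s = (\<lambda>p q. dlt p q * (if p = i then s else 1))"

lemma sum_if_left[simp]: "(\<Sum>k<(N::nat). (if k = a then x else 0) * f k) = (if a < N then x * f a else (0::complex))"
proof -
  have "(\<Sum>k<N. (if k = a then x else 0) * f k) = (\<Sum>k<N. if k = a then x * f a else 0)"
    by (rule sum.cong) auto
  moreover have "(\<Sum>k<N. if k = a then x * f a else 0) = (if a \<in> {..<N} then x * f a else 0)"
    by (rule sum.delta) simp
  ultimately show ?thesis by simp
qed

lemma sum_if_right[simp]: "(\<Sum>k<(N::nat). f k * (if k = a then x else 0)) = (if a < N then f a * x else (0::complex))"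
  using sum_if_left[where N=N and a=a and x=x and f=f] by (simp add: mult.commute)

lemma unipG_alt: "unipG i j s p k = (if k = p then 1 else 0) + (if k = j then (if p = i then s else 0) else 0)"
  unfolding unipG_def dlt_def by auto

lemma unipG_alt2: "unipG i j s k q = (if k = q then 1 else 0) + (if k = i then (if q = j then s else 0) else 0)"
  unfolding unipG_def dlt_def by auto

lemma unip_GL:
  assumes "i < N" "j < N" "i \<noteq> j"
  shows "(unipG i j t, unipG i j (-t)) \<in> GL N"
proof -
  have A: "(\<Sum>k<N. unipG i j s p k * unipG i j (-s) k q) = dlt p q" if "p < N" "q < N" for p q s
  proof -
    have "(\<Sum>k<N. unipG i j s p k * unipG i j (-s) k q)
       = (\<Sum>k<N. (if k = p then 1 else 0) * unipG i j (-s) k q) + (\<Sum>k<N. (if k = j then (if p = i then s else 0) else 0) * unipG i j (-s) k q)"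
      unfolding unipG_alt[of i j s p] by (simp add: algebra_simps sum.distrib)
    also have "\<dots> = dlt p q"
      unfolding unipG_alt2 using assms that by (auto simp: dlt_def)
    finally show ?thesis .
  qed
  show ?thesis unfolding GL_def using A[of _ _ t] A[of _ _ "-t"] by (auto simp: dlt_def)
qed

lemma diag_GL:
  assumes "s \<noteq> 0"
  shows "(diagG i s, diagG i (1/s)) \<in> GL N"
proof -
  have A: "(\<Sum>k<N. diagG i s p k * diagG i (1/s) k q) = dlt p q" "(\<Sum>k<N. diagG i (1/s) p k * diagG i s k q) = dlt p q" if "p < N" "q < N" for p q
    using that assms unfolding diagG_def dlt_def by (auto simp: if_distrib[where f="\<lambda>x. x * _"] cong: if_cong)
  show ?thesis unfolding GL_def using A by (auto simp: dlt_def)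
qed

definition rho :: "nat \<Rightarrow> nat \<Rightarrow> nat \<Rightarrow> nat \<Rightarrow> nat \<Rightarrow> tensor \<Rightarrow> tensor" where
  "rho N m n i j T = (\<lambda>I J. if I \<in> idx N m \<and> J \<in> idx N n then
     (\<Sum>a<m. if I ! a = i then T (I[a := j]) J else 0) - (\<Sum>b<n. if J ! b = j then T I (J[b := i]) else 0)
     else 0)"

lemma sum_dG:
  assumes "I \<in> idx N m" "j < N"
  shows "(\<Sum>I'\<in>idx N m. (\<Sum>a<m. (if I ! a = i \<and> I' ! a = j then 1 else 0) *
            (\<Prod>c\<in>{..<m}-{a}. dlt (I ! c) (I' ! c))) * F I')
       = (\<Sum>a<m. if I ! a = i then F (I[a := j]) else 0)"
proof -
  have "(\<Sum>I'\<in>idx N m. (\<Sum>a<m. (if I ! a = i \<and> I' ! a = j then 1 else 0) *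
            (\<Prod>c\<in>{..<m}-{a}. dlt (I ! c) (I' ! c))) * F I')
      = (\<Sum>a<m. \<Sum>I'\<in>idx N m. (if I ! a = i \<and> I' ! a = j then 1 else 0) *
            (\<Prod>c\<in>{..<m}-{a}. dlt (I ! c) (I' ! c)) * F I')"
    by (simp add: sum_distrib_right sum.swap[of _ "idx N m"])
  also have "\<dots> = (\<Sum>a<m. if I ! a = i then F (I[a := j]) else 0)"
  proof (rule sum.cong[OF refl])
    fix a assume a: "a \<in> {..<m}"
    show "(\<Sum>I'\<in>idx N m. (if I ! a = i \<and> I' ! a = j then 1 else 0) *
            (\<Prod>c\<in>{..<m}-{a}. dlt (I ! c) (I' ! c)) * F I') = (if I ! a = i then F (I[a := j]) else 0)"
    proof (cases "I ! a = i")
      case True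
      have "(\<Sum>I'\<in>idx N m. (if I ! a = i \<and> I' ! a = j then 1 else 0) *
            (\<Prod>c\<in>{..<m}-{a}. dlt (I ! c) (I' ! c)) * F I')
          = (\<Sum>I'\<in>idx N m. (if I' = I[a := j] then 1 else 0) * F I')"
        apply (rule sum.cong[OF refl])
        using prod_delta_upd[of _ N m I a j] True assms a by (simp add: dlt_def)
      also have "\<dots> = F (I[a := j])" using assms by (intro sum_idx_delta) auto
      finally show ?thesis using True by simp
    qed simp
  qed
  finally show ?thesis .
qed

lemma sum_dH:
  assumes "J \<in> idx N n" "i < N"
  shows "(\<Sum>J'\<in>idx N n. F J' * (\<Sum>b<n. (if J' ! b = i \<and> J ! b = j then 1 else 0) *
            (\<Prod>d\<in>{..<n}-{b}. dlt (J' ! d) (J ! d))))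
       = (\<Sum>b<n. if J ! b = j then F (J[b := i]) else 0)"
proof -
  have e: "dlt (J' ! d) (J ! d) = dlt (J ! d) (J' ! d)" for J' d by (auto simp: dlt_def)
  show ?thesis using sum_dG[OF assms, of j F] by (simp add: e mult.commute conj_commute)
qed

lemma sum_G0:
  assumes "I \<in> idx N m"
  shows "(\<Sum>I'\<in>idx N m. (\<Prod>c<m. dlt (I ! c) (I' ! c)) * F I') = F I"
proof -
  have "(\<Sum>I'\<in>idx N m. (\<Prod>c<m. dlt (I ! c) (I' ! c)) * F I') = (\<Sum>I'\<in>idx N m. (if I' = I then 1 else 0) * F I')"
    apply (rule sum.cong[OF refl]) using prod_delta_eq[OF _ assms] by (simp add: dlt_def)
  thus ?thesis using sum_idx_delta[OF assms] by simp
qed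

lemma sum_H0:
  assumes "J \<in> idx N n"
  shows "(\<Sum>J'\<in>idx N n. F J' * (\<Prod>d<n. dlt (J' ! d) (J ! d))) = F J"
proof -
  have e: "dlt (J' ! d) (J ! d) = dlt (J ! d) (J' ! d)" for J' d by (auto simp: dlt_def)
  show ?thesis using sum_G0[OF assms, of F] by (simp add: e mult.commute)
qed

lemma act_at:
  "I \<in> idx N m \<Longrightarrow> J \<in> idx N n \<Longrightarrow> act N m n (g, h) T I J =
     (\<Sum>I'\<in>idx N m. \<Sum>J'\<in>idx N n. (\<Prod>a<m. g (I ! a) (I' ! a)) * T I' J' * (\<Prod>b<n. h (J' ! b) (J ! b)))"
  by (simp add: act_def)

lemma unipG_deriv: "((\<lambda>t. unipG i j t p q) has_field_derivative (if p = i \<and> q = j then 1 else 0)) (at x)"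
  unfolding unipG_def by (auto intro!: derivative_eq_intros)

lemma unipG_deriv': "((\<lambda>t. unipG i j (-t) p q) has_field_derivative - (if p = i \<and> q = j then 1 else 0)) (at x)"
  unfolding unipG_def by (auto intro!: derivative_eq_intros)

lemma unipG0[simp]: "unipG i j 0 = dlt"
  unfolding unipG_def by auto

lemma rho_unip_zero:
  assumes hv: "hw_vector N m n lam v" and ij: "i < j" "j < N"
  shows "rho N m n i j v I J = 0"
proof (cases "I \<in> idx N m \<and> J \<in> idx N n")
  case False thus ?thesis by (auto simp: rho_def)
next
  case True
  hence I: "I \<in> idx N m" and J: "J \<in> idx N n" by auto
  define G where "G t I' = (\<Prod>a<m. unipG i j t (I ! a) (I' ! a))" for t I'
  define H where "H t J' = (\<Prod>b<n. unipG i j (-t) (J' ! b) (J ! b))" for t J'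
  define f where "f t = (\<Sum>I'\<in>idx N m. \<Sum>J'\<in>idx N n. G t I' * v I' J' * H t J')" for t
  define dG where "dG I' = (\<Sum>a<m. (if I ! a = i \<and> I' ! a = j then 1 else 0) * (\<Prod>c\<in>{..<m}-{a}. dlt (I ! c) (I' ! c)))" for I'
  define dH where "dH J' = (\<Sum>b<n. (if J' ! b = i \<and> J ! b = j then 1 else 0) * (\<Prod>d\<in>{..<n}-{b}. dlt (J' ! d) (J ! d)))" for J'
  have inv: "act N m n (unipG i j t, unipG i j (-t)) v = v" for t
  proof -
    have "(unipG i j t, unipG i j (-t)) \<in> GL N" using ij by (intro unip_GL) auto
    moreover have "\<forall>p<N. unipG i j t p p = 1" using ij by (auto simp: unipG_def dlt_def)
    moreover have "\<forall>p<N. \<forall>q<N. q < p \<longrightarrow> unipG i j t p q = 0" using ij by (auto simp: unipG_def dlt_def)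
    ultimately show ?thesis using hv unfolding hw_vector_def by blast
  qed
  have fconst: "f = (\<lambda>t. v I J)"
  proof
    fix t
    have "act N m n (unipG i j t, unipG i j (-t)) v I J = v I J" using inv by simp
    thus "f t = v I J" using I J by (simp add: act_at f_def G_def H_def)
  qed
  have dG1: "((\<lambda>t. G t I') has_field_derivative dG I') (at 0)" for I'
  proof -
    have "((\<lambda>t. G t I') has_field_derivative (\<Sum>a<m. (if I ! a = i \<and> I' ! a = j then 1 else 0) * (\<Prod>c\<in>{..<m}-{a}. unipG i j 0 (I ! c) (I' ! c)))) (at 0)"
      unfolding G_def by (rule has_field_derivative_prod) (rule unipG_deriv)
    thus ?thesis by (simp add: dG_def)
  qed
  have dH1: "((\<lambda>t. H t J') has_field_derivative - dH J') (at 0)" for J'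
  proof -
    have "((\<lambda>t. H t J') has_field_derivative (\<Sum>b<n. - (if J' ! b = i \<and> J ! b = j then 1 else 0) * (\<Prod>d\<in>{..<n}-{b}. unipG i j (-0) (J' ! d) (J ! d)))) (at 0)"
      unfolding H_def by (rule has_field_derivative_prod) (rule unipG_deriv')
    thus ?thesis by (simp add: dH_def sum_negf)
  qed
  define D where "D = (\<Sum>I'\<in>idx N m. \<Sum>J'\<in>idx N n. dG I' * v I' J' * H 0 J' - G 0 I' * v I' J' * dH J')"
  have "(f has_field_derivative D) (at 0)"
    unfolding f_def D_def
    apply (intro DERIV_sum)
    apply (rule DERIV_cong)
     apply (rule DERIV_mult[OF DERIV_mult[OF dG1 DERIV_const] dH1])
    by (simp add: algebra_simps)
  hence D0: "D = 0" using fconst DERIV_const DERIV_unique by metis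
  have H0: "H 0 J' = (\<Prod>d<n. dlt (J' ! d) (J ! d))" for J' by (simp add: H_def)
  have G0: "G 0 I' = (\<Prod>c<m. dlt (I ! c) (I' ! c))" for I' by (simp add: G_def)
  have "D = (\<Sum>I'\<in>idx N m. dG I' * (\<Sum>J'\<in>idx N n. v I' J' * H 0 J'))
          - (\<Sum>I'\<in>idx N m. G 0 I' * (\<Sum>J'\<in>idx N n. v I' J' * dH J'))"
    unfolding D_def by (simp add: sum_subtractf sum_distrib_left mult.assoc)
  also have "(\<Sum>I'\<in>idx N m. dG I' * (\<Sum>J'\<in>idx N n. v I' J' * H 0 J')) = (\<Sum>I'\<in>idx N m. dG I' * v I' J)"
    unfolding H0 using sum_H0[OF J] by simp
  also have "\<dots> = (\<Sum>a<m. if I ! a = i then v (I[a := j]) J else 0)"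
    unfolding dG_def using sum_dG[OF I ij(2)] by simp
  also have "(\<Sum>I'\<in>idx N m. G 0 I' * (\<Sum>J'\<in>idx N n. v I' J' * dH J'))
      = (\<Sum>I'\<in>idx N m. G 0 I' * (\<Sum>b<n. if J ! b = j then v I' (J[b := i]) else 0))"
    unfolding dH_def using sum_dH[OF J, of i] ij by simp
  also have "\<dots> = (\<Sum>b<n. if J ! b = j then v I (J[b := i]) else 0)"
    unfolding G0 using sum_G0[OF I] by simp
  finally show ?thesis using D0 I J by (simp add: rho_def)
qed

lemma pow2_inj:
  assumes "(2::complex) powi a = 2 powi b"
  shows "a = b"
proof (rule ccontr)
  have r: "(2::real) powi a = 2 powi b"
  proof -
    have "complex_of_real ((2::real) powi a) = complex_of_real (2 powi b)"
      using assms by (simp add: of_real_power_int)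
    thus ?thesis by (simp only: of_real_eq_iff)
  qed
  assume "a \<noteq> b"
  hence "a < b \<or> b < a" by auto
  thus False using r power_int_strict_increasing[of a b "2::real"] power_int_strict_increasing[of b a "2::real"] by auto
qed

definition cnt :: "nat \<Rightarrow> nat list \<Rightarrow> nat \<Rightarrow> nat" where
  "cnt m I i = card {a. a < m \<and> I ! a = i}"

lemma prod_cnt: "(\<Prod>a<m. if I ! a = i then s else 1) = (s::complex) ^ cnt m I i"
proof -
  have "(\<Prod>a<m. if I ! a = i then s else 1) = (\<Prod>a\<in>{a. a < m \<and> I ! a = i}. s)"
    by (subst prod.inter_filter[symmetric]) (auto intro: prod.cong)
  thus ?thesis by (simp add: cnt_def)
qed

lemma sum_cnt: "(\<Sum>a<m. if I ! a = i then s else 0) = of_nat (cnt m I i) * (s::complex)"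
proof -
  have "(\<Sum>a<m. if I ! a = i then s else 0) = (\<Sum>a\<in>{a. a < m \<and> I ! a = i}. s)"
    by (subst sum.inter_filter[symmetric]) (auto intro: sum.cong)
  thus ?thesis by (simp add: cnt_def)
qed

lemma diagG_alt: "diagG i s p q = dlt p q * (if q = i then s else 1)"
  unfolding diagG_def dlt_def by auto

lemma act_diag:
  assumes I: "I \<in> idx N m" and J: "J \<in> idx N n"
  shows "act N m n (diagG i s, diagG i t) v I J = s ^ cnt m I i * t ^ cnt n J i * v I J"
proof -
  have "act N m n (diagG i s, diagG i t) v I J =
     (\<Sum>I'\<in>idx N m. \<Sum>J'\<in>idx N n. (s ^ cnt m I i * t ^ cnt n J i) * ((\<Prod>a<m. dlt (I ! a) (I' ! a)) * (v I' J' * (\<Prod>b<n. dlt (J' ! b) (J ! b)))))"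
    unfolding act_at[OF I J]
    apply (intro sum.cong refl)
    apply (subst (1) diagG_def)
    apply (subst diagG_alt)
    by (simp add: prod.distrib prod_cnt)
  also have "\<dots> = (s ^ cnt m I i * t ^ cnt n J i) * (\<Sum>I'\<in>idx N m. (\<Prod>a<m. dlt (I ! a) (I' ! a)) * (\<Sum>J'\<in>idx N n. v I' J' * (\<Prod>b<n. dlt (J' ! b) (J ! b))))"
    by (simp add: sum_distrib_left)
  also have "\<dots> = (s ^ cnt m I i * t ^ cnt n J i) * v I J"
    using sum_H0[OF J] sum_G0[OF I] by simp
  finally show ?thesis by simp
qed

lemma rho_diag_hw:
  assumes hv: "hw_vector N m n lam v" and vt: "v \<in> tens N m n" and i: "i < N"
  shows "rho N m n i i v I J = of_int (lam i) * v I J"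
proof (cases "I \<in> idx N m \<and> J \<in> idx N n")
  case False thus ?thesis using vt by (auto simp: rho_def tens_def)
next
  case True
  hence I: "I \<in> idx N m" and J: "J \<in> idx N n" by auto
  have GL: "(diagG i 2, diagG i (1/2)) \<in> GL N" by (rule diag_GL) simp
  have dz: "\<forall>p<N. \<forall>q<N. p \<noteq> q \<longrightarrow> diagG i 2 p q = 0" by (auto simp: diagG_def dlt_def)
  have "act N m n (diagG i 2, diagG i (1/2)) v = (\<lambda>I J. (\<Prod>k<N. diagG i 2 k k powi lam k) * v I J)"
    using hv GL dz unfolding hw_vector_def by blast
  moreover have "(\<Prod>k<N. diagG i 2 k k powi lam k) = 2 powi lam i"
  proof -
    have "(\<Prod>k<N. diagG i 2 k k powi lam k) = (\<Prod>k<N. if k = i then 2 powi lam i else 1)"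
      by (intro prod.cong refl) (auto simp: diagG_def dlt_def)
    thus ?thesis using i by (simp add: prod.delta)
  qed
  ultimately have eq: "2 ^ cnt m I i * (1/2) ^ cnt n J i * v I J = 2 powi lam i * v I J"
    using act_diag[OF I J, of i 2 "1/2" v] by (metis)
  have rv: "rho N m n i i v I J = (of_nat (cnt m I i) - of_nat (cnt n J i)) * v I J"
  proof -
    have "(\<Sum>a<m. if I ! a = i then v (I[a := i]) J else 0) = (\<Sum>a<m. if I ! a = i then v I J else 0)"
      by (intro sum.cong refl) (auto)
    moreover have "(\<Sum>b<n. if J ! b = i then v I (J[b := i]) else 0) = (\<Sum>b<n. if J ! b = i then v I J else 0)"
      by (intro sum.cong refl) (auto)
    ultimately show ?thesis using I J by (simp add: rho_def sum_cnt algebra_simps)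
  qed
  show ?thesis
  proof (cases "v I J = 0")
    case True thus ?thesis using rv by simp
  next
    case False
    hence "2 ^ cnt m I i * (1/2) ^ cnt n J i = (2::complex) powi lam i" using eq by simp
    hence "(2::complex) powi (int (cnt m I i) - int (cnt n J i)) = 2 powi lam i"
      by (simp add: power_int_diff power_one_over field_simps)
    hence "int (cnt m I i) - int (cnt n J i) = lam i" by (rule pow2_inj)
    hence "(of_nat (cnt m I i) - of_nat (cnt n J i) :: complex) = of_int (lam i)"
      by (metis of_int_diff of_int_of_nat_eq)
    thus ?thesis using rv by simp
  qed
qed

lemma if_minus0: "(if P then (A::complex) - B else 0) = (if P then A else 0) - (if P then B else 0)"
  by simp
lemma if_sum0: "(if P then sum f S else (0::complex)) = sum (\<lambda>x. if P then f x else 0) S"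
  by simp
lemma if_if0: "(if P then (if Q then x else 0) else (0::complex)) = (if P \<and> Q then x else 0)"
  by simp

lemma rho_rho:
  assumes I: "I \<in> idx N m" and J: "J \<in> idx N n" and ij: "i < N" "j < N"
  shows "rho N m n i j (rho N m n j i T) I J =
     (\<Sum>a<m. \<Sum>c<m. if I ! a = i \<and> I[a := j] ! c = j then T (I[a := j, c := i]) J else 0)
   - (\<Sum>a<m. \<Sum>d<n. if I ! a = i \<and> J ! d = i then T (I[a := j]) (J[d := j]) else 0)
   - (\<Sum>b<n. \<Sum>c<m. if J ! b = j \<and> I ! c = j then T (I[c := i]) (J[b := i]) else 0)
   + (\<Sum>b<n. \<Sum>d<n. if J ! b = j \<and> J[b := i] ! d = i then T I (J[b := i, d := j]) else 0)" (is "_ = ?R")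
proof -
  have "rho N m n i j (rho N m n j i T) I J =
     (\<Sum>a<m. if I ! a = i then (\<Sum>c<m. if I[a := j] ! c = j then T (I[a := j, c := i]) J else 0)
                               - (\<Sum>d<n. if J ! d = i then T (I[a := j]) (J[d := j]) else 0) else 0)
   - (\<Sum>b<n. if J ! b = j then (\<Sum>c<m. if I ! c = j then T (I[c := i]) (J[b := i]) else 0)
                               - (\<Sum>d<n. if J[b := i] ! d = i then T I (J[b := i, d := j]) else 0) else 0)"
    unfolding rho_def using I J ij idx_upd[OF I ij(2)] idx_upd[OF J ij(1)]
    apply (simp only: if_True simp_thms)
    done
  also have "\<dots> = ?R"
    by (simp only: if_minus0 if_sum0 if_if0 sum_subtractf) (simp add: algebra_simps)
  finally show ?thesis .
qed

lemma sum_sum_if_eq: "(\<Sum>c<(m::nat). (if c = a then x else 0) + f c) = (if a < m then x else 0) + (\<Sum>c<m. f c :: complex)"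
  by (simp add: sum.distrib)

lemma X1_split:
  assumes K: "length K = m"
  shows "(\<Sum>a<m. \<Sum>c<m. if K ! a = i \<and> K[a := j] ! c = j then F (K[a := j, c := i]) else (0::complex))
   = (\<Sum>a<m. if K ! a = i then F K else 0)
   + (\<Sum>a<m. \<Sum>c<m. if c \<noteq> a \<and> K ! a = i \<and> K ! c = j then F (K[a := j, c := i]) else 0)"
proof -
  have "(\<Sum>c<m. if K ! a = i \<and> K[a := j] ! c = j then F (K[a := j, c := i]) else 0)
      = (if K ! a = i then F K else 0) + (\<Sum>c<m. if c \<noteq> a \<and> K ! a = i \<and> K ! c = j then F (K[a := j, c := i]) else 0)"
    if a: "a < m" for a
  proof -
    have "(\<Sum>c<m. if K ! a = i \<and> K[a := j] ! c = j then F (K[a := j, c := i]) else 0)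
       = (\<Sum>c<m. (if c = a then (if K ! a = i then F K else 0) else 0) + (if c \<noteq> a \<and> K ! a = i \<and> K ! c = j then F (K[a := j, c := i]) else 0))"
      by (intro sum.cong refl) (use a K in \<open>auto simp: nth_list_update\<close>)
    thus ?thesis using a by (simp only: sum_sum_if_eq) simp
  qed
  thus ?thesis by (simp add: sum.distrib)
qed

lemma Y_sym:
  "(\<Sum>a<m. \<Sum>c<m. if c \<noteq> a \<and> K ! a = i \<and> K ! c = j then F (K[a := j, c := i]) else (0::complex))
 = (\<Sum>a<m. \<Sum>c<m. if c \<noteq> a \<and> K ! a = j \<and> K ! c = i then F (K[a := i, c := j]) else (0::complex))"
  apply (subst sum.swap)
  apply (intro sum.cong refl)
  by (auto simp: list_update_swap)

lemma L1:
  assumes K: "length K = m"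
  shows "(\<Sum>a<m. \<Sum>c<m. if K ! a = i \<and> K[a := j] ! c = j then F (K[a := j, c := i]) else (0::complex))
       - (\<Sum>a<m. \<Sum>c<m. if K ! a = j \<and> K[a := i] ! c = i then F (K[a := i, c := j]) else (0::complex))
       = (\<Sum>a<m. if K ! a = i then F K else 0) - (\<Sum>a<m. if K ! a = j then F K else 0)"
proof -
  note e1 = X1_split[OF K, where i=i and j=j and F=F]
  note e2 = X1_split[OF K, where i=j and j=i and F=F]
  note e3 = Y_sym[where m=m and K=K and i=i and j=j and F=F]
  show ?thesis unfolding e1 e2 e3 by simp
qed

lemma sum_lt_restrict: "c \<le> m \<Longrightarrow> (\<Sum>a<(m::nat). if a < c then f a else (0::complex)) = (\<Sum>a<c. f a)"
proof -
  assume c: "c \<le> m"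
  have "(\<Sum>a<m. if a < c then f a else 0) = (\<Sum>a\<in>{..<m} \<inter> {a. a < c}. f a)"
    by (simp add: sum.inter_restrict)
  also have "{..<m} \<inter> {a. a < c} = {..<c}" using c by auto
  finally show ?thesis .
qed

lemma sym_sum:
  assumes S: "\<And>a c. S a c = S c a"
  shows "(\<Sum>a<(m::nat). \<Sum>c<m. if c \<noteq> a then S a c else (0::complex)) = 2 * (\<Sum>b<m. \<Sum>a<b. S a b)"
proof -
  have h1: "(\<Sum>a<m. \<Sum>c<m. if c \<noteq> a then S a c else 0)
     = (\<Sum>a<m. \<Sum>c<m. if a < c then S a c else 0) + (\<Sum>a<m. \<Sum>c<m. if c < a then S a c else 0)"
    by (simp only: sum.distrib[symmetric]) (intro sum.cong refl, auto)
  have h2: "(\<Sum>a<m. \<Sum>c<m. if c < a then S a c else 0) = (\<Sum>a<m. \<Sum>c<m. if a < c then S a c else 0)"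
    apply (subst sum.swap)
    apply (rule sum.cong[OF refl])+
    using S by simp
  have h3: "(\<Sum>a<m. \<Sum>c<m. if a < c then S a c else 0) = (\<Sum>c<m. \<Sum>a<c. S a c)"
    apply (subst sum.swap)
    by (intro sum.cong refl sum_lt_restrict) auto
  show ?thesis unfolding h1 h2 h3 by simp
qed

lemma swap_at_sym: "swap_at K a c = swap_at K c a"
  unfolding swap_at_def by (cases "a = c") (auto simp: list_update_swap)

lemma L2:
  assumes K: "K \<in> idx N m"
  shows "(\<Sum>i<N. \<Sum>j<N. \<Sum>a<m. \<Sum>c<m. if K ! a = i \<and> K[a := j] ! c = j then F (K[a := j, c := i]) else (0::complex))
       = of_nat (N * m) * F K + 2 * (\<Sum>b<m. \<Sum>a<b. F (swap_at K a b))"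
proof -
  have len: "length K = m" using K by (simp add: idx_len)
  have "(\<Sum>i<N. \<Sum>j<N. \<Sum>a<m. \<Sum>c<m. if K ! a = i \<and> K[a := j] ! c = j then F (K[a := j, c := i]) else (0::complex))
    = (\<Sum>i<N. \<Sum>j<N. \<Sum>a<m. if K ! a = i then F K else 0)
     + (\<Sum>i<N. \<Sum>j<N. \<Sum>a<m. \<Sum>c<m. if c \<noteq> a \<and> K ! a = i \<and> K ! c = j then F (K[a := j, c := i]) else 0)"
    unfolding X1_split[OF len] by (simp add: sum.distrib)
  also have "(\<Sum>i<N. \<Sum>j<N. \<Sum>a<m. if K ! a = i then F K else 0) = of_nat N * (\<Sum>i<N. \<Sum>a<m. if K ! a = i then F K else 0)"
    by (simp add: sum_distrib_left)
  also have "(\<Sum>i<N. \<Sum>a<m. if K ! a = i then F K else 0) = (\<Sum>a<m. \<Sum>i<N. if K ! a = i then F K else 0)"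
    by (rule sum.swap)
  also have "\<dots> = (\<Sum>a<m. F K)"
    using K by (intro sum.cong refl) (simp add: idx_nth)
  also have "of_nat N * (\<Sum>a<m. F K) = of_nat (N * m) * F K"
    by simp
  also have "(\<Sum>i<N. \<Sum>j<N. \<Sum>a<m. \<Sum>c<m. if c \<noteq> a \<and> K ! a = i \<and> K ! c = j then F (K[a := j, c := i]) else 0)
     = (\<Sum>a<m. \<Sum>c<m. \<Sum>i<N. \<Sum>j<N. if c \<noteq> a \<and> K ! a = i \<and> K ! c = j then F (K[a := j, c := i]) else 0)"
  proof -
    let ?f = "\<lambda>i j a c. if c \<noteq> a \<and> K ! a = i \<and> K ! c = j then F (K[a := j, c := i]) else (0::complex)"
    have "(\<Sum>i<N. \<Sum>j<N. \<Sum>a<m. \<Sum>c<m. ?f i j a c) = (\<Sum>i<N. \<Sum>a<m. \<Sum>j<N. \<Sum>c<m. ?f i j a c)"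
      by (rule sum.cong[OF refl], rule sum.swap)
    also have "\<dots> = (\<Sum>a<m. \<Sum>i<N. \<Sum>j<N. \<Sum>c<m. ?f i j a c)"
      by (rule sum.swap)
    also have "\<dots> = (\<Sum>a<m. \<Sum>i<N. \<Sum>c<m. \<Sum>j<N. ?f i j a c)"
      by (rule sum.cong[OF refl], rule sum.cong[OF refl], rule sum.swap)
    also have "\<dots> = (\<Sum>a<m. \<Sum>c<m. \<Sum>i<N. \<Sum>j<N. ?f i j a c)"
      by (rule sum.cong[OF refl], rule sum.swap)
    finally show ?thesis .
  qed
  also have "\<dots> = (\<Sum>a<m. \<Sum>c<m. if c \<noteq> a then F (swap_at K a c) else 0)"
  proof (intro sum.cong refl)
    fix a c assume a: "a \<in> {..<m}" and c: "c \<in> {..<m}"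
    have "(\<Sum>i<N. \<Sum>j<N. if c \<noteq> a \<and> K ! a = i \<and> K ! c = j then F (K[a := j, c := i]) else 0)
        = (\<Sum>i<N. if i = K ! a then (\<Sum>j<N. if j = K ! c then (if c \<noteq> a then F (K[a := j, c := i]) else 0) else 0) else 0)"
      by (intro sum.cong refl) auto
    also have "\<dots> = (if c \<noteq> a then F (swap_at K a c) else 0)"
      using a c K by (simp add: idx_nth swap_at_def)
    finally show "(\<Sum>i<N. \<Sum>j<N. if c \<noteq> a \<and> K ! a = i \<and> K ! c = j then F (K[a := j, c := i]) else 0) = (if c \<noteq> a then F (swap_at K a c) else 0)" .
  qed
  also have "\<dots> = 2 * (\<Sum>b<m. \<Sum>a<b. F (swap_at K a b))"
    by (rule sym_sum) (simp add: swap_at_sym)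
  finally show ?thesis .
qed

lemma swap4: "(\<Sum>i\<in>A. \<Sum>j\<in>B. \<Sum>a\<in>C. \<Sum>c\<in>D. f i j a c) = (\<Sum>a\<in>C. \<Sum>c\<in>D. \<Sum>i\<in>A. \<Sum>j\<in>B. (f i j a c :: complex))"
proof -
  have "(\<Sum>i\<in>A. \<Sum>j\<in>B. \<Sum>a\<in>C. \<Sum>c\<in>D. f i j a c) = (\<Sum>i\<in>A. \<Sum>a\<in>C. \<Sum>j\<in>B. \<Sum>c\<in>D. f i j a c)"
    by (rule sum.cong[OF refl], rule sum.swap)
  also have "\<dots> = (\<Sum>a\<in>C. \<Sum>i\<in>A. \<Sum>j\<in>B. \<Sum>c\<in>D. f i j a c)"
    by (rule sum.swap)
  also have "\<dots> = (\<Sum>a\<in>C. \<Sum>i\<in>A. \<Sum>c\<in>D. \<Sum>j\<in>B. f i j a c)"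
    by (rule sum.cong[OF refl], rule sum.cong[OF refl], rule sum.swap)
  also have "\<dots> = (\<Sum>a\<in>C. \<Sum>c\<in>D. \<Sum>i\<in>A. \<Sum>j\<in>B. f i j a c)"
    by (rule sum.cong[OF refl], rule sum.swap)
  finally show ?thesis .
qed

lemma rho_diag_gen:
  assumes I: "I \<in> idx N m" and J: "J \<in> idx N n"
  shows "rho N m n i i T I J = (\<Sum>a<m. if I ! a = i then T I J else 0) - (\<Sum>b<n. if J ! b = i then T I J else 0)"
proof -
  have "(\<Sum>a<m. if I ! a = i then T (I[a := i]) J else 0) = (\<Sum>a<m. if I ! a = i then T I J else 0)"
    by (intro sum.cong refl) auto
  moreover have "(\<Sum>b<n. if J ! b = i then T I (J[b := i]) else 0) = (\<Sum>b<n. if J ! b = i then T I J else 0)"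
    by (intro sum.cong refl) auto
  ultimately show ?thesis using I J by (simp add: rho_def)
qed

lemma commutator:
  assumes I: "I \<in> idx N m" and J: "J \<in> idx N n" and ij: "i < N" "j < N"
  shows "rho N m n i j (rho N m n j i T) I J - rho N m n j i (rho N m n i j T) I J
       = rho N m n i i T I J - rho N m n j j T I J"
proof -
  have lI: "length I = m" and lJ: "length J = n" using I J by (auto simp: idx_len)
  have x23: "(\<Sum>a<m. \<Sum>d<n. if I ! a = i \<and> J ! d = i then T (I[a := j]) (J[d := j]) else 0)
     = (\<Sum>b<n. \<Sum>c<m. if J ! b = i \<and> I ! c = i then T (I[c := j]) (J[b := j]) else 0)" for i j
    by (subst sum.swap) (intro sum.cong refl, auto)
  define X1 where "X1 i j = (\<Sum>a<m. \<Sum>c<m. if I ! a = i \<and> I[a := j] ! c = j then T (I[a := j, c := i]) J else 0)" for i j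
  define X2 where "X2 i j = (\<Sum>a<m. \<Sum>d<n. if I ! a = i \<and> J ! d = i then T (I[a := j]) (J[d := j]) else 0)" for i j
  define X3 where "X3 i j = (\<Sum>b<n. \<Sum>c<m. if J ! b = j \<and> I ! c = j then T (I[c := i]) (J[b := i]) else 0)" for i j
  define X4 where "X4 i j = (\<Sum>b<n. \<Sum>d<n. if J ! b = j \<and> J[b := i] ! d = i then T I (J[b := i, d := j]) else 0)" for i j
  define A where "A i = (\<Sum>a<m. if I ! a = i then T I J else 0)" for i
  define B where "B i = (\<Sum>b<n. if J ! b = i then T I J else 0)" for i
  have e1: "X1 i j - X1 j i = A i - A j"
    unfolding X1_def A_def using L1[OF lI, where i=i and j=j and F="\<lambda>K. T K J"] by simp
  have e4: "X4 i j - X4 j i = B j - B i"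
    unfolding X4_def B_def using L1[OF lJ, where i=j and j=i and F="\<lambda>L. T I L"] by simp
  have e2: "X2 i j = X3 j i" "X2 j i = X3 i j" unfolding X2_def X3_def using x23 by auto
  have "rho N m n i j (rho N m n j i T) I J - rho N m n j i (rho N m n i j T) I J
      = (X1 i j - X1 j i) + (X4 i j - X4 j i) - (X2 i j - X3 j i) - (X3 i j - X2 j i)"
    unfolding rho_rho[OF I J ij] rho_rho[OF I J ij(2,1)] X1_def X2_def X3_def X4_def
    by (simp add: algebra_simps)
  also have "\<dots> = (A i - B i) - (A j - B j)" unfolding e1 e4 e2 by simp
  also have "\<dots> = rho N m n i i T I J - rho N m n j j T I J"
    unfolding rho_diag_gen[OF I J] A_def B_def by simp
  finally show ?thesis .
qed

definition Omega :: "nat \<Rightarrow> nat \<Rightarrow> nat \<Rightarrow> tensor \<Rightarrow> tensor" where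
  "Omega N m n T = (\<lambda>I J. \<Sum>i<N. \<Sum>j<N. rho N m n i j (rho N m n j i T) I J)"

lemma delta_pair:
  assumes "p < N"
  shows "(\<Sum>i<N. \<Sum>j<(N::nat). if p = i \<and> q = i then G j else (0::complex)) = (if p = q then \<Sum>j<N. G j else 0)"
proof -
  have "(\<Sum>i<N. \<Sum>j<(N::nat). if p = i \<and> q = i then G j else (0::complex)) = (\<Sum>i<N. if i = p then (if p = q then \<Sum>j<N. G j else 0) else 0)"
    by (intro sum.cong refl) auto
  thus ?thesis using assms by (simp add: sum.delta)
qed

lemma Omega_eq:
  assumes I: "I \<in> idx N m" and J: "J \<in> idx N n"
  shows "Omega N m n T I J = 2 * (Lop m T I J + Rop n T I J - Aop N m n T I J) + of_nat ((m + n) * N) * T I J"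
proof -
  have s1: "(\<Sum>i<N. \<Sum>j<N. \<Sum>a<m. \<Sum>c<m. if I ! a = i \<and> I[a := j] ! c = j then T (I[a := j, c := i]) J else 0)
     = of_nat (N * m) * T I J + 2 * Lop m T I J"
    using L2[OF I, where F="\<lambda>K. T K J"] by (simp add: Lop_def)
  have s4: "(\<Sum>i<N. \<Sum>j<N. \<Sum>b<n. \<Sum>d<n. if J ! b = j \<and> J[b := i] ! d = i then T I (J[b := i, d := j]) else 0)
     = of_nat (N * n) * T I J + 2 * Rop n T I J"
    using L2[OF J, where F="\<lambda>L. T I L"] by (subst sum.swap) (simp add: Rop_def)
  have s2: "(\<Sum>i<N. \<Sum>j<N. \<Sum>a<m. \<Sum>d<n. if I ! a = i \<and> J ! d = i then T (I[a := j]) (J[d := j]) else 0)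
     = Aop N m n T I J"
    unfolding Aop_def apply (subst swap4)
  proof (intro sum.cong refl)
    fix a d assume a: "a \<in> {..<m}" and d: "d \<in> {..<n}"
    show "(\<Sum>i<N. \<Sum>j<N. if I ! a = i \<and> J ! d = i then T (I[a := j]) (J[d := j]) else 0) = contr N m n a d T I J"
      using delta_pair[OF idx_nth[OF I], of a "J ! d" "\<lambda>j. T (I[a := j]) (J[d := j])"] a I J
      by (simp add: contr_def)
  qed
  have s3: "(\<Sum>i<N. \<Sum>j<N. \<Sum>b<n. \<Sum>c<m. if J ! b = j \<and> I ! c = j then T (I[c := i]) (J[b := i]) else 0)
     = Aop N m n T I J"
  proof -
    have "(\<Sum>i<N. \<Sum>j<N. \<Sum>b<n. \<Sum>c<m. if J ! b = j \<and> I ! c = j then T (I[c := i]) (J[b := i]) else 0)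
       = (\<Sum>j<N. \<Sum>i<N. \<Sum>b<n. \<Sum>c<m. if J ! b = j \<and> I ! c = j then T (I[c := i]) (J[b := i]) else 0)"
      by (rule sum.swap)
    also have "\<dots> = (\<Sum>j<N. \<Sum>i<N. \<Sum>c<m. \<Sum>b<n. if I ! c = j \<and> J ! b = j then T (I[c := i]) (J[b := i]) else 0)"
      apply (rule sum.cong[OF refl], rule sum.cong[OF refl])
      apply (subst sum.swap)
      by (simp add: conj_commute)
    also have "\<dots> = Aop N m n T I J" using s2 .
    finally show ?thesis .
  qed
  have "Omega N m n T I J = (\<Sum>i<N. \<Sum>j<N.
      (\<Sum>a<m. \<Sum>c<m. if I ! a = i \<and> I[a := j] ! c = j then T (I[a := j, c := i]) J else 0)
    - (\<Sum>a<m. \<Sum>d<n. if I ! a = i \<and> J ! d = i then T (I[a := j]) (J[d := j]) else 0)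
    - (\<Sum>b<n. \<Sum>c<m. if J ! b = j \<and> I ! c = j then T (I[c := i]) (J[b := i]) else 0)
    + (\<Sum>b<n. \<Sum>d<n. if J ! b = j \<and> J[b := i] ! d = i then T I (J[b := i, d := j]) else 0))"
    unfolding Omega_def by (intro sum.cong refl) (simp add: rho_rho[OF I J])
  also have "\<dots> = (\<Sum>i<N. \<Sum>j<N. \<Sum>a<m. \<Sum>c<m. if I ! a = i \<and> I[a := j] ! c = j then T (I[a := j, c := i]) J else 0)
    - (\<Sum>i<N. \<Sum>j<N. \<Sum>a<m. \<Sum>d<n. if I ! a = i \<and> J ! d = i then T (I[a := j]) (J[d := j]) else 0)
    - (\<Sum>i<N. \<Sum>j<N. \<Sum>b<n. \<Sum>c<m. if J ! b = j \<and> I ! c = j then T (I[c := i]) (J[b := i]) else 0)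
    + (\<Sum>i<N. \<Sum>j<N. \<Sum>b<n. \<Sum>d<n. if J ! b = j \<and> J[b := i] ! d = i then T I (J[b := i, d := j]) else 0)"
    by (simp only: sum.distrib sum_subtractf)
  also have "\<dots> = 2 * (Lop m T I J + Rop n T I J - Aop N m n T I J) + of_nat ((m + n) * N) * T I J"
    unfolding s1 s2 s3 s4 by (simp add: algebra_simps)
  finally show ?thesis .
qed

lemma rho_scale: "rho N m n i j (\<lambda>I J. c * T I J) I J = c * rho N m n i j T I J"
  by (simp add: rho_def sum_distrib_left right_diff_distrib if_distrib[where f="\<lambda>x. c * x"] cong: if_cong)

lemma rho_zero: "rho N m n i j (\<lambda>I J. 0) I J = 0"
  by (simp add: rho_def)

lemma Omega_hw:
  assumes hv: "hw_vector N m n lam v" and vt: "v \<in> tens N m n"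
    and I: "I \<in> idx N m" and J: "J \<in> idx N n"
  shows "Omega N m n v I J = of_int (\<Sum>i<N. \<Sum>j<N. if i = j then lam i ^ 2 else if i < j then lam i - lam j else 0) * v I J"
proof -
  have "rho N m n i j (rho N m n j i v) I J = of_int (if i = j then lam i ^ 2 else if i < j then lam i - lam j else 0) * v I J"
    if i: "i < N" and j: "j < N" for i j
  proof -
    consider "i = j" | "i < j" | "j < i" by arith
    thus ?thesis
    proof cases
      case 1
      have "rho N m n i i v = (\<lambda>I J. of_int (lam i) * v I J)"
        using rho_diag_hw[OF hv vt i] by auto
      thus ?thesis using 1 rho_scale[of N m n i i "of_int (lam i)" v I J] rho_diag_hw[OF hv vt i, of I J]
        by (simp add: power2_eq_square)
    next
      case 2
      have z: "rho N m n i j v = (\<lambda>I J. 0)" using rho_unip_zero[OF hv 2 j] by auto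
      have "rho N m n i j (rho N m n j i v) I J - rho N m n j i (rho N m n i j v) I J
          = rho N m n i i v I J - rho N m n j j v I J" by (rule commutator[OF I J i j])
      thus ?thesis using 2 z rho_zero[of N m n j i I J] rho_diag_hw[OF hv vt i, of I J] rho_diag_hw[OF hv vt j, of I J]
        by (simp add: algebra_simps)
    next
      case 3
      have z: "rho N m n j i v = (\<lambda>I J. 0)" using rho_unip_zero[OF hv 3 i] by auto
      thus ?thesis using 3 rho_zero[of N m n i j I J] by simp
    qed
  qed
  hence "Omega N m n v I J = (\<Sum>i<N. \<Sum>j<N. of_int (if i = j then lam i ^ 2 else if i < j then lam i - lam j else 0) * v I J)"
    unfolding Omega_def by (intro sum.cong refl) auto
  thus ?thesis by (simp add: sum_distrib_right)
qed

lemma gauss2: "2 * (\<Sum>j<p. int j) = int p * (int p - 1)"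
  by (induction p) (auto simp: algebra_simps)

lemma sum_restrict_int: "c \<le> N \<Longrightarrow> (\<Sum>i<(N::nat). if i < c then f i else (0::int)) = (\<Sum>i<c. f i)"
proof -
  assume c: "c \<le> N"
  have "(\<Sum>i<N. if i < c then f i else 0) = (\<Sum>i\<in>{..<N} \<inter> {i. i < c}. f i)"
    by (simp add: sum.inter_restrict)
  also have "{..<N} \<inter> {i. i < c} = {..<c}" using c by auto
  finally show ?thesis .
qed

lemma part_sum:
  "(\<Sum>i<length \<mu>. int (\<mu> ! i) * (int (\<mu> ! i) + int N - 1 - 2 * int i))
    = 2 * content \<mu> + int N * int (sum_list \<mu>)"
proof -
  have c: "2 * content \<mu> = (\<Sum>i<length \<mu>. int (\<mu> ! i) * (int (\<mu> ! i) - 1) - 2 * int i * int (\<mu> ! i))"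
  proof -
    have "2 * content \<mu> = (\<Sum>i<length \<mu>. 2 * (\<Sum>j<\<mu> ! i. int j) - 2 * int i * int (\<mu> ! i))"
      unfolding content_def by (simp add: sum_distrib_left sum_subtractf algebra_simps)
    thus ?thesis by (simp add: gauss2)
  qed
  have s: "int (sum_list \<mu>) = (\<Sum>i<length \<mu>. int (\<mu> ! i))"
    by (simp add: sum_list_sum_nth atLeast0LessThan)
  show ?thesis unfolding c s by (simp add: sum_distrib_left sum.distrib[symmetric] algebra_simps)
qed

lemma comb:
  fixes \<mu> \<nu> :: "nat list"
  assumes len: "length \<mu> + length \<nu> \<le> N"
  defines "lam \<equiv> hw N \<mu> \<nu>"
  shows "(\<Sum>i<N. \<Sum>j<N. if i = j then lam i ^ 2 else if i < j then lam i - lam j else 0)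
       = 2 * content \<mu> + 2 * content \<nu> + int N * int (sum_list \<mu> + sum_list \<nu>)"
proof -
  have h1: "(\<Sum>j<N. if i = j then lam i ^ 2 else if i < j then lam i - lam j else 0)
      = lam i ^ 2 + (\<Sum>j<N. if i < j then lam i else 0) - (\<Sum>j<N. if i < j then lam j else 0)" if i: "i < N" for i
  proof -
    have "(\<Sum>j<N. if i = j then lam i ^ 2 else if i < j then lam i - lam j else 0)
        = (\<Sum>j<N. (if j = i then lam i ^ 2 else 0) + ((if i < j then lam i else 0) - (if i < j then lam j else 0)))"
      by (intro sum.cong refl) auto
    thus ?thesis using i by (simp add: sum.distrib sum_subtractf)
  qed
  have h2: "(\<Sum>j<N. if i < j then lam i else 0) = int (N - 1 - i) * lam i" if i: "i < N" for i
  proof -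
    have "(\<Sum>j<N. if i < j then lam i else 0) = (\<Sum>j\<in>{..<N} \<inter> {j. i < j}. lam i)"
      by (subst sum.inter_restrict) auto
    also have "{..<N} \<inter> {j. i < j} = {i<..<N}" by auto
    finally show ?thesis by simp
  qed
  have h3: "(\<Sum>i<N. \<Sum>j<N. if i < j then lam j else 0) = (\<Sum>j<N. int j * lam j)"
  proof -
    have "(\<Sum>i<N. \<Sum>j<N. if i < j then lam j else 0) = (\<Sum>j<N. \<Sum>i<N. if i < j then lam j else 0)"
      by (rule sum.swap)
    also have "\<dots> = (\<Sum>j<N. int j * lam j)"
    proof (intro sum.cong refl)
      fix j assume j: "j \<in> {..<N}"
      have "(\<Sum>i<N. if i < j then lam j else 0) = (\<Sum>i\<in>{..<N} \<inter> {i. i < j}. lam j)"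
        by (subst sum.inter_restrict) auto
      also have "{..<N} \<inter> {i. i < j} = {..<j}" using j by auto
      finally show "(\<Sum>i<N. if i < j then lam j else 0) = int j * lam j" by simp
    qed
    finally show ?thesis .
  qed
  have tot: "(\<Sum>i<N. \<Sum>j<N. if i = j then lam i ^ 2 else if i < j then lam i - lam j else 0)
      = (\<Sum>i<N. lam i * (lam i + int N - 1 - 2 * int i))"
  proof -
    have "(\<Sum>i<N. \<Sum>j<N. if i = j then lam i ^ 2 else if i < j then lam i - lam j else 0)
        = (\<Sum>i<N. lam i ^ 2 + int (N - 1 - i) * lam i) - (\<Sum>i<N. \<Sum>j<N. if i < j then lam j else 0)"
    proof -
      have "(\<Sum>i<N. \<Sum>j<N. if i = j then lam i ^ 2 else if i < j then lam i - lam j else 0)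
          = (\<Sum>i<N. lam i ^ 2 + int (N - 1 - i) * lam i - (\<Sum>j<N. if i < j then lam j else 0))"
        by (intro sum.cong refl) (simp add: h1 h2)
      thus ?thesis by (simp only: sum_subtractf)
    qed
    also have "\<dots> = (\<Sum>i<N. lam i ^ 2 + int (N - 1 - i) * lam i - int i * lam i)"
      unfolding h3 by (simp add: sum_subtractf)
    also have "\<dots> = (\<Sum>i<N. lam i * (lam i + int N - 1 - 2 * int i))"
      by (intro sum.cong refl) (auto simp: power2_eq_square algebra_simps of_nat_diff)
    finally show ?thesis .
  qed
  define A where "A i = int (\<mu> ! i) * (int (\<mu> ! i) + int N - 1 - 2 * int i)" for i
  define B where "B k = int (\<nu> ! k) * (int (\<nu> ! k) + int N - 1 - 2 * int k)" for k
  have g: "lam i * (lam i + int N - 1 - 2 * int i)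
      = (if i < length \<mu> then A i else 0) + (if N - Suc i < length \<nu> then B (N - Suc i) else 0)"
    if i: "i < N" for i
  proof (cases "i < length \<mu>")
    case True
    hence "\<not> N - Suc i < length \<nu>" using len by arith
    thus ?thesis using True by (simp add: lam_def hw_def A_def)
  next
    case False
    show ?thesis
    proof (cases "N - Suc i < length \<nu>")
      case True
      have e: "int (N - Suc i) = int N - 1 - int i" using i by (simp add: of_nat_diff)
      show ?thesis using False True i
        by (simp add: lam_def hw_def B_def e algebra_simps)
    next
      case False2: False
      thus ?thesis using False by (simp add: lam_def hw_def)
    qed
  qed
  have "(\<Sum>i<N. lam i * (lam i + int N - 1 - 2 * int i))
      = (\<Sum>i<N. if i < length \<mu> then A i else 0) + (\<Sum>i<N. if N - Suc i < length \<nu> then B (N - Suc i) else 0)"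
    unfolding sum.distrib[symmetric] by (intro sum.cong refl) (simp add: g)
  also have "(\<Sum>i<N. if N - Suc i < length \<nu> then B (N - Suc i) else 0) = (\<Sum>i<N. if i < length \<nu> then B i else 0)"
    by (rule sum.nat_diff_reindex[where g="\<lambda>k. if k < length \<nu> then B k else 0"])
  also have "(\<Sum>i<N. if i < length \<mu> then A i else 0) = (\<Sum>i<length \<mu>. A i)"
    using len by (intro sum_restrict_int) auto
  also have "(\<Sum>i<N. if i < length \<nu> then B i else 0) = (\<Sum>i<length \<nu>. B i)"
    using len by (intro sum_restrict_int) auto
  finally show ?thesis unfolding tot A_def B_def part_sum by (simp add: algebra_simps)
qed

definition tau :: "nat \<Rightarrow> nat \<Rightarrow> nat \<Rightarrow> nat" where
  "tau a b c = (if c = a then b else if c = b then a else c)"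

lemma tau_inv[simp]: "tau a b (tau a b c) = c"
  by (auto simp: tau_def)

lemma tau_lt: "a < m \<Longrightarrow> b < m \<Longrightarrow> c < m \<Longrightarrow> tau a b c < m"
  by (auto simp: tau_def)

lemma length_swap_at[simp]: "length (swap_at K a b) = length K"
  by (simp add: swap_at_def)

lemma nth_swap_at: "a < length K \<Longrightarrow> b < length K \<Longrightarrow> c < length K \<Longrightarrow> swap_at K a b ! c = K ! tau a b c"
  by (auto simp: swap_at_def tau_def nth_list_update)

lemma swap_at_inv[simp]: "a < length K \<Longrightarrow> b < length K \<Longrightarrow> swap_at (swap_at K a b) a b = K"
  by (rule nth_equalityI) (auto simp: nth_swap_at tau_lt)

lemma swap_at_idx_rev:
  assumes a: "a < m" "b < m" and s: "swap_at K a b \<in> idx N m"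
  shows "K \<in> idx N m"
proof -
  have l: "length K = m" using idx_len[OF s] by simp
  have "swap_at (swap_at K a b) a b \<in> idx N m" by (rule swap_at_idx[OF s a])
  moreover have "swap_at (swap_at K a b) a b = K" using a l by simp
  ultimately show "K \<in> idx N m" by simp
qed

lemma swap_at_idx_iff:
  assumes a: "a < m" "b < m"
  shows "(swap_at K a b \<in> idx N m) = (K \<in> idx N m)"
  using swap_at_idx_rev[OF a] swap_at_idx[OF _ a] by blast

lemma prod_swap:
  assumes "a < m" "b < m" "length K = m" "length K' = m"
  shows "(\<Prod>c<m. f (swap_at K a b ! c) (swap_at K' a b ! c)) = (\<Prod>c<m. f (K ! c) (K' ! c))"
  apply (rule prod.reindex_bij_witness[where i="tau a b" and j="tau a b"])
  using assms by (auto simp: tau_lt nth_swap_at)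

lemma sum_swap_reindex:
  assumes "a < m" "b < m"
  shows "(\<Sum>I'\<in>idx N m. F I') = (\<Sum>I'\<in>idx N m. F (swap_at I' a b))"
  apply (rule sum.reindex_bij_witness[where i="\<lambda>I. swap_at I a b" and j="\<lambda>I. swap_at I a b"])
  using assms by (auto simp: idx_len intro: swap_at_idx)

lemma act_swap_I:
  assumes I: "I \<in> idx N m" and J: "J \<in> idx N n" and ab: "a < m" "b < m"
  shows "act N m n (g, h) T (swap_at I a b) J = act N m n (g, h) (\<lambda>I' J'. T (swap_at I' a b) J') I J"
proof -
  have sI: "swap_at I a b \<in> idx N m" by (rule swap_at_idx[OF I ab])
  have "act N m n (g, h) T (swap_at I a b) J = (\<Sum>I'\<in>idx N m. \<Sum>J'\<in>idx N n. (\<Prod>c<m. g (swap_at I a b ! c) (I' ! c)) * T I' J' * (\<Prod>d<n. h (J' ! d) (J ! d)))"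
    by (rule act_at[OF sI J])
  also have "\<dots> = (\<Sum>I'\<in>idx N m. \<Sum>J'\<in>idx N n. (\<Prod>c<m. g (swap_at I a b ! c) (swap_at I' a b ! c)) * T (swap_at I' a b) J' * (\<Prod>d<n. h (J' ! d) (J ! d)))"
    by (rule sum_swap_reindex[OF ab])
  also have "\<dots> = (\<Sum>I'\<in>idx N m. \<Sum>J'\<in>idx N n. (\<Prod>c<m. g (I ! c) (I' ! c)) * T (swap_at I' a b) J' * (\<Prod>d<n. h (J' ! d) (J ! d)))"
    apply (intro sum.cong refl)
    using prod_swap[OF ab, of I _ g] I by (simp add: idx_len)
  also have "\<dots> = act N m n (g, h) (\<lambda>I' J'. T (swap_at I' a b) J') I J"
    by (rule act_at[OF I J, symmetric])
  finally show ?thesis .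
qed

lemma act_swap_J:
  assumes I: "I \<in> idx N m" and J: "J \<in> idx N n" and ab: "a < n" "b < n"
  shows "act N m n (g, h) T I (swap_at J a b) = act N m n (g, h) (\<lambda>I' J'. T I' (swap_at J' a b)) I J"
proof -
  have sJ: "swap_at J a b \<in> idx N n" by (rule swap_at_idx[OF J ab])
  have "act N m n (g, h) T I (swap_at J a b) = (\<Sum>I'\<in>idx N m. \<Sum>J'\<in>idx N n. (\<Prod>c<m. g (I ! c) (I' ! c)) * T I' J' * (\<Prod>d<n. h (J' ! d) (swap_at J a b ! d)))"
    by (rule act_at[OF I sJ])
  also have "\<dots> = (\<Sum>I'\<in>idx N m. \<Sum>J'\<in>idx N n. (\<Prod>c<m. g (I ! c) (I' ! c)) * T I' (swap_at J' a b) * (\<Prod>d<n. h (swap_at J' a b ! d) (swap_at J a b ! d)))"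
    by (rule sum.cong[OF refl]) (rule sum_swap_reindex[OF ab])
  also have "\<dots> = (\<Sum>I'\<in>idx N m. \<Sum>J'\<in>idx N n. (\<Prod>c<m. g (I ! c) (I' ! c)) * T I' (swap_at J' a b) * (\<Prod>d<n. h (J' ! d) (J ! d)))"
    apply (intro sum.cong refl)
    using prod_swap[OF ab, of _ J h] J by (simp add: idx_len)
  also have "\<dots> = act N m n (g, h) (\<lambda>I' J'. T I' (swap_at J' a b)) I J"
    by (rule act_at[OF I J, symmetric])
  finally show ?thesis .
qed

lemma act_sum_lin:
  assumes "finite S"
  shows "act N m n gh (\<lambda>I J. \<Sum>x\<in>S. F x I J) I J = (\<Sum>x\<in>S. act N m n gh (F x) I J)"
  unfolding act_def using assms
  by (auto simp: sum_distrib_left sum_distrib_right sum.swap[of _ S] intro!: sum.cong)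

lemma Lop_equiv:
  shows "Lop m (act N m n (g, h) T) = act N m n (g, h) (Lop m T)"
proof (intro ext)
  fix I J
  show "Lop m (act N m n (g, h) T) I J = act N m n (g, h) (Lop m T) I J"
  proof (cases "I \<in> idx N m \<and> J \<in> idx N n")
    case False
    have "act N m n (g, h) T (swap_at I a b) J = 0" if "a < b" "b < m" for a b
    proof -
      have "\<not> (swap_at I a b \<in> idx N m \<and> J \<in> idx N n)" using False that swap_at_idx_iff[of a m b I N] by auto
      thus ?thesis unfolding act_def by (simp only: if_False)
    qed
    hence "Lop m (act N m n (g, h) T) I J = 0" by (simp add: Lop_def)
    moreover have "act N m n (g, h) (Lop m T) I J = 0" using False unfolding act_def by (simp only: if_False)
    ultimately show ?thesis by simp
  next
    case True
    hence I: "I \<in> idx N m" and J: "J \<in> idx N n" by auto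
    have "Lop m (act N m n (g, h) T) I J = (\<Sum>b<m. \<Sum>a<b. act N m n (g, h) (\<lambda>I' J'. T (swap_at I' a b) J') I J)"
      unfolding Lop_def by (intro sum.cong refl) (simp add: act_swap_I[OF I J])
    also have "\<dots> = act N m n (g, h) (Lop m T) I J"
      unfolding Lop_def by (simp add: act_sum_lin)
    finally show ?thesis .
  qed
qed

lemma Rop_equiv:
  shows "Rop n (act N m n (g, h) T) = act N m n (g, h) (Rop n T)"
proof (intro ext)
  fix I J
  show "Rop n (act N m n (g, h) T) I J = act N m n (g, h) (Rop n T) I J"
  proof (cases "I \<in> idx N m \<and> J \<in> idx N n")
    case False
    have "act N m n (g, h) T I (swap_at J a b) = 0" if "a < b" "b < n" for a b
    proof -
      have "\<not> (I \<in> idx N m \<and> swap_at J a b \<in> idx N n)" using False that swap_at_idx_iff[of a n b J N] by auto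
      thus ?thesis unfolding act_def by (simp only: if_False)
    qed
    hence "Rop n (act N m n (g, h) T) I J = 0" by (simp add: Rop_def)
    moreover have "act N m n (g, h) (Rop n T) I J = 0" using False unfolding act_def by (simp only: if_False)
    ultimately show ?thesis by simp
  next
    case True
    hence I: "I \<in> idx N m" and J: "J \<in> idx N n" by auto
    have "Rop n (act N m n (g, h) T) I J = (\<Sum>b<n. \<Sum>a<b. act N m n (g, h) (\<lambda>I' J'. T I' (swap_at J' a b)) I J)"
      unfolding Rop_def by (intro sum.cong refl) (simp add: act_swap_J[OF I J])
    also have "\<dots> = act N m n (g, h) (Rop n T) I J"
      unfolding Rop_def by (simp add: act_sum_lin)
    finally show ?thesis .
  qed
qed

lemma GL_gh: "(g, h) \<in> GL N \<Longrightarrow> p < N \<Longrightarrow> q < N \<Longrightarrow> (\<Sum>k<N. g p k * h k q) = dlt p q"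
  by (auto simp: GL_def dlt_def)
lemma GL_hg: "(g, h) \<in> GL N \<Longrightarrow> p < N \<Longrightarrow> q < N \<Longrightarrow> (\<Sum>k<N. h p k * g k q) = dlt p q"
  by (auto simp: GL_def dlt_def)

lemma swap3: "(\<Sum>l\<in>A. \<Sum>k\<in>B. \<Sum>k'\<in>C. f l k k') = (\<Sum>k\<in>B. \<Sum>k'\<in>C. \<Sum>l\<in>A. (f l k k' :: complex))"
proof -
  have "(\<Sum>l\<in>A. \<Sum>k\<in>B. \<Sum>k'\<in>C. f l k k') = (\<Sum>k\<in>B. \<Sum>l\<in>A. \<Sum>k'\<in>C. f l k k')"
    by (rule sum.swap)
  also have "\<dots> = (\<Sum>k\<in>B. \<Sum>k'\<in>C. \<Sum>l\<in>A. f l k k')"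
    by (rule sum.cong[OF refl], rule sum.swap)
  finally show ?thesis .
qed

lemma inner_R:
  assumes gh: "(g, h) \<in> GL N" and pq: "p < N" "q < N"
  shows "(\<Sum>k<N. \<Sum>k'<N. g p k * (if k = k' then s else 0) * h k' q) = s * dlt p q"
proof -
  have "(\<Sum>k<N. \<Sum>k'<N. g p k * (if k = k' then s else 0) * h k' q) = (\<Sum>k<N. s * (g p k * h k q))"
  proof (rule sum.cong[OF refl])
    fix k assume k: "k \<in> {..<N}"
    have "(\<Sum>k'<N. g p k * (if k = k' then s else 0) * h k' q) = (\<Sum>k'<N. if k' = k then g p k * s * h k q else 0)"
      by (rule sum.cong) auto
    thus "(\<Sum>k'<N. g p k * (if k = k' then s else 0) * h k' q) = s * (g p k * h k q)"
      using k by (simp add: sum.delta)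
  qed
  also have "\<dots> = s * dlt p q" using GL_gh[OF gh pq] by (simp add: sum_distrib_left[symmetric])
  finally show ?thesis .
qed

lemma inner_L:
  assumes gh: "(g, h) \<in> GL N"
  shows "(\<Sum>l<N. \<Sum>k<N. \<Sum>k'<N. g l k * F k k' * h k' l) = (\<Sum>k<N. F k k)"
proof -
  have "(\<Sum>l<N. \<Sum>k<N. \<Sum>k'<N. g l k * F k k' * h k' l) = (\<Sum>k<N. \<Sum>k'<N. \<Sum>l<N. g l k * F k k' * h k' l)"
    by (rule swap3)
  also have "\<dots> = (\<Sum>k<N. \<Sum>k'<N. F k k' * dlt k' k)"
  proof (intro sum.cong refl)
    fix k k' assume "k \<in> {..<N}" "k' \<in> {..<N}"
    hence "(\<Sum>l<N. h k' l * g l k) = dlt k' k" using GL_hg[OF gh] by auto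
    thus "(\<Sum>l<N. g l k * F k k' * h k' l) = F k k' * dlt k' k"
      by (simp add: sum_distrib_left[symmetric] mult_ac)
  qed
  also have "\<dots> = (\<Sum>k<N. F k k)"
  proof (rule sum.cong[OF refl])
    fix k assume k: "k \<in> {..<N}"
    have "(\<Sum>k'<N. F k k' * dlt k' k) = (\<Sum>k'<N. if k' = k then F k k else 0)"
      by (rule sum.cong) (auto simp: dlt_def)
    thus "(\<Sum>k'<N. F k k' * dlt k' k) = F k k" using k by (simp add: sum.delta)
  qed
  finally show ?thesis .
qed

lemma prod_upd2:
  assumes "a < m" "length K = m" "length K' = m"
  shows "(\<Prod>c<m. f (K[a := x] ! c) (K'[a := y] ! c)) = f x y * (\<Prod>c\<in>{..<m}-{a}. f (K ! c) (K' ! c))"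
proof -
  have "(\<Prod>c<m. f (K[a := x] ! c) (K'[a := y] ! c)) = f x y * (\<Prod>c\<in>{..<m}-{a}. f (K[a := x] ! c) (K'[a := y] ! c))"
    using assms by (subst prod.remove[of _ a]) auto
  also have "(\<Prod>c\<in>{..<m}-{a}. f (K[a := x] ! c) (K'[a := y] ! c)) = (\<Prod>c\<in>{..<m}-{a}. f (K ! c) (K' ! c))"
    by (rule prod.cong) auto
  finally show ?thesis .
qed

lemma split2:
  assumes "a < m" "b < n" "0 < N"
  shows "(\<Sum>I'\<in>idx N m. \<Sum>J'\<in>idx N n. F I' J') =
    (\<Sum>I0\<in>{I\<in>idx N m. I ! a = 0}. \<Sum>J0\<in>{J\<in>idx N n. J ! b = 0}. \<Sum>k<N. \<Sum>k'<N. F (I0[a := k]) (J0[b := k']))"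
proof -
  have "(\<Sum>I'\<in>idx N m. \<Sum>J'\<in>idx N n. F I' J') = (\<Sum>I0\<in>{I\<in>idx N m. I ! a = 0}. \<Sum>k<N. \<Sum>J'\<in>idx N n. F (I0[a := k]) J')"
    by (rule sum_idx_split[OF assms(1,3)])
  also have "\<dots> = (\<Sum>I0\<in>{I\<in>idx N m. I ! a = 0}. \<Sum>k<N. \<Sum>J0\<in>{J\<in>idx N n. J ! b = 0}. \<Sum>k'<N. F (I0[a := k]) (J0[b := k']))"
    by (intro sum.cong refl sum_idx_split[OF assms(2,3)])
  also have "\<dots> = (\<Sum>I0\<in>{I\<in>idx N m. I ! a = 0}. \<Sum>J0\<in>{J\<in>idx N n. J ! b = 0}. \<Sum>k<N. \<Sum>k'<N. F (I0[a := k]) (J0[b := k']))"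
    by (rule sum.cong[OF refl], rule sum.swap)
  finally show ?thesis .
qed

lemma contr_equiv:
  assumes gh: "(g, h) \<in> GL N" and ab: "a < m" "b < n" and N: "0 < N"
  shows "contr N m n a b (act N m n (g, h) T) I J = act N m n (g, h) (contr N m n a b T) I J"
proof (cases "I \<in> idx N m \<and> J \<in> idx N n")
  case False
  have "contr N m n a b (act N m n (g, h) T) I J = 0" using False unfolding contr_def by auto
  moreover have "act N m n (g, h) (contr N m n a b T) I J = 0" using False unfolding act_def by auto
  ultimately show ?thesis by simp
next
  case True
  hence I: "I \<in> idx N m" and J: "J \<in> idx N n" by auto
  have lI: "length I = m" and lJ: "length J = n" using I J by (auto simp: idx_len)
  have Ia: "I ! a < N" and Jb: "J ! b < N" using idx_nth[OF I ab(1)] idx_nth[OF J ab(2)] .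
  define Za where "Za = {I\<in>idx N m. I ! a = 0}"
  define Zb where "Zb = {J\<in>idx N n. J ! b = 0}"
  define Gr where "Gr I0 = (\<Prod>c\<in>{..<m}-{a}. g (I ! c) (I0 ! c))" for I0
  define Hr where "Hr J0 = (\<Prod>d\<in>{..<n}-{b}. h (J0 ! d) (J ! d))" for J0
  define S where "S I0 J0 = (\<Sum>l<N. T (I0[a := l]) (J0[b := l]))" for I0 J0
  have lZa: "length I0 = m" if "I0 \<in> Za" for I0 using that by (auto simp: Za_def idx_len)
  have lZb: "length J0 = n" if "J0 \<in> Zb" for J0 using that by (auto simp: Zb_def idx_len)
  have Gup: "(\<Prod>c<m. g (I[a := l] ! c) (P[a := k] ! c)) = g l k * Gr P" if "P \<in> Za" for P l k
    unfolding Gr_def by (rule prod_upd2[OF ab(1) lI lZa[OF that]])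
  have Gup': "(\<Prod>c<m. g (I ! c) (P[a := k] ! c)) = g (I ! a) k * Gr P" if "P \<in> Za" for P k
    using Gup[OF that, of "I ! a" k] by simp
  have Hup: "(\<Prod>d<n. h (Q[b := k'] ! d) (J[b := l] ! d)) = h k' l * Hr Q" if "Q \<in> Zb" for Q l k'
    unfolding Hr_def by (rule prod_upd2[OF ab(2) lZb[OF that] lJ])
  have Hup': "(\<Prod>d<n. h (Q[b := k'] ! d) (J ! d)) = h k' (J ! b) * Hr Q" if "Q \<in> Zb" for Q k'
    using Hup[OF that, of k' "J ! b"] by simp
  have "act N m n (g, h) (contr N m n a b T) I J
      = (\<Sum>I0\<in>Za. \<Sum>J0\<in>Zb. \<Sum>k<N. \<Sum>k'<N. (\<Prod>c<m. g (I ! c) (I0[a := k] ! c)) * contr N m n a b T (I0[a := k]) (J0[b := k']) * (\<Prod>d<n. h (J0[b := k'] ! d) (J ! d)))"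
    unfolding act_at[OF I J] Za_def Zb_def by (rule split2[OF ab N])
  also have "\<dots> = (\<Sum>I0\<in>Za. \<Sum>J0\<in>Zb. Gr I0 * Hr J0 * (S I0 J0 * dlt (I ! a) (J ! b)))"
  proof (intro sum.cong refl)
    fix I0 J0 assume I0: "I0 \<in> Za" and J0: "J0 \<in> Zb"
    have I0i: "I0[a := k] \<in> idx N m" if "k < N" for k using I0 that by (auto simp: Za_def)
    have J0i: "J0[b := k] \<in> idx N n" if "k < N" for k using J0 that by (auto simp: Zb_def)
    have "(\<Sum>k<N. \<Sum>k'<N. (\<Prod>c<m. g (I ! c) (I0[a := k] ! c)) * contr N m n a b T (I0[a := k]) (J0[b := k']) * (\<Prod>d<n. h (J0[b := k'] ! d) (J ! d)))
        = (\<Sum>k<N. \<Sum>k'<N. Gr I0 * Hr J0 * (g (I ! a) k * (if k = k' then S I0 J0 else 0) * h k' (J ! b)))"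
    proof (intro sum.cong refl)
      fix k k' assume k: "k \<in> {..<N}" and k': "k' \<in> {..<N}"
      have "contr N m n a b T (I0[a := k]) (J0[b := k']) = (if k = k' then S I0 J0 else 0)"
        using I0i[of k] J0i[of k'] k k' ab lZa[OF I0] lZb[OF J0] by (simp add: contr_def S_def)
      thus "(\<Prod>c<m. g (I ! c) (I0[a := k] ! c)) * contr N m n a b T (I0[a := k]) (J0[b := k']) * (\<Prod>d<n. h (J0[b := k'] ! d) (J ! d))
          = Gr I0 * Hr J0 * (g (I ! a) k * (if k = k' then S I0 J0 else 0) * h k' (J ! b))"
        using Gup'[OF I0, of k] Hup'[OF J0, of k'] by (simp add: mult_ac)
    qed
    also have "\<dots> = Gr I0 * Hr J0 * (S I0 J0 * dlt (I ! a) (J ! b))"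
      using inner_R[OF gh Ia Jb, of "S I0 J0"] by (simp add: sum_distrib_left[symmetric])
    finally show "(\<Sum>k<N. \<Sum>k'<N. (\<Prod>c<m. g (I ! c) (I0[a := k] ! c)) * contr N m n a b T (I0[a := k]) (J0[b := k']) * (\<Prod>d<n. h (J0[b := k'] ! d) (J ! d)))
        = Gr I0 * Hr J0 * (S I0 J0 * dlt (I ! a) (J ! b))" .
  qed
  finally have R: "act N m n (g, h) (contr N m n a b T) I J = (\<Sum>I0\<in>Za. \<Sum>J0\<in>Zb. Gr I0 * Hr J0 * (S I0 J0 * dlt (I ! a) (J ! b)))" .
  have L1: "contr N m n a b (act N m n (g, h) T) I J = (if I ! a = J ! b then \<Sum>l<N. act N m n (g, h) T (I[a := l]) (J[b := l]) else 0)"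
    using I J by (simp add: contr_def)
  have L2: "act N m n (g, h) T (I[a := l]) (J[b := l]) = (\<Sum>I0\<in>Za. \<Sum>J0\<in>Zb. \<Sum>k<N. \<Sum>k'<N. g l k * (Gr I0 * Hr J0 * T (I0[a := k]) (J0[b := k'])) * h k' l)"
    if l: "l < N" for l
  proof -
    have "act N m n (g, h) T (I[a := l]) (J[b := l]) = (\<Sum>I0\<in>Za. \<Sum>J0\<in>Zb. \<Sum>k<N. \<Sum>k'<N. (\<Prod>c<m. g (I[a := l] ! c) (I0[a := k] ! c)) * T (I0[a := k]) (J0[b := k']) * (\<Prod>d<n. h (J0[b := k'] ! d) (J[b := l] ! d)))"
      unfolding act_at[OF idx_upd[OF I l] idx_upd[OF J l]] Za_def Zb_def by (rule split2[OF ab N])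
    also have "\<dots> = (\<Sum>I0\<in>Za. \<Sum>J0\<in>Zb. \<Sum>k<N. \<Sum>k'<N. g l k * (Gr I0 * Hr J0 * T (I0[a := k]) (J0[b := k'])) * h k' l)"
      apply (intro sum.cong refl)
      subgoal for I0 J0 k k' using Gup[where P=I0 and l=l and k=k] Hup[where Q=J0 and l=l and k'=k'] by (simp add: mult_ac)
      done
    finally show ?thesis .
  qed
  have "(\<Sum>l<N. act N m n (g, h) T (I[a := l]) (J[b := l])) = (\<Sum>l<N. \<Sum>I0\<in>Za. \<Sum>J0\<in>Zb. \<Sum>k<N. \<Sum>k'<N. g l k * (Gr I0 * Hr J0 * T (I0[a := k]) (J0[b := k'])) * h k' l)"
    by (intro sum.cong refl) (simp add: L2)
  also have "\<dots> = (\<Sum>I0\<in>Za. \<Sum>J0\<in>Zb. \<Sum>l<N. \<Sum>k<N. \<Sum>k'<N. g l k * (Gr I0 * Hr J0 * T (I0[a := k]) (J0[b := k'])) * h k' l)"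
    by (rule swap3)
  also have "\<dots> = (\<Sum>I0\<in>Za. \<Sum>J0\<in>Zb. \<Sum>k<N. Gr I0 * Hr J0 * T (I0[a := k]) (J0[b := k]))"
    by (intro sum.cong refl inner_L[OF gh])
  also have "\<dots> = (\<Sum>I0\<in>Za. \<Sum>J0\<in>Zb. Gr I0 * Hr J0 * S I0 J0)"
    by (simp add: S_def sum_distrib_left)
  finally have L: "contr N m n a b (act N m n (g, h) T) I J = (if I ! a = J ! b then (\<Sum>I0\<in>Za. \<Sum>J0\<in>Zb. Gr I0 * Hr J0 * S I0 J0) else 0)"
    using L1 by simp
  show ?thesis unfolding L R by (auto simp: dlt_def)
qed

lemma act_add: "act N m n gh (\<lambda>I J. S I J + T I J) I J = act N m n gh S I J + act N m n gh T I J"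
  unfolding act_def by (simp add: algebra_simps sum.distrib)

lemma act_diff: "act N m n gh (\<lambda>I J. S I J - T I J) I J = act N m n gh S I J - act N m n gh T I J"
  unfolding act_def by (simp add: algebra_simps sum_subtractf)

lemma act_scale: "act N m n gh (\<lambda>I J. c * T I J) I J = c * act N m n gh T I J"
  unfolding act_def by (simp add: algebra_simps sum_distrib_left)

lemma Aop_equiv:
  assumes gh: "(g, h) \<in> GL N" and N: "0 < N"
  shows "Aop N m n (act N m n (g, h) T) I J = act N m n (g, h) (Aop N m n T) I J"
proof -
  have "Aop N m n (act N m n (g, h) T) I J = (\<Sum>a<m. \<Sum>b<n. act N m n (g, h) (contr N m n a b T) I J)"
    unfolding Aop_def by (intro sum.cong refl) (simp add: contr_equiv[OF gh _ _ N])
  also have "\<dots> = act N m n (g, h) (Aop N m n T) I J"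
    unfolding Aop_def by (simp add: act_sum_lin)
  finally show ?thesis .
qed

lemma Cop_equiv:
  assumes gh: "(g, h) \<in> GL N" and N: "0 < N"
  shows "Cop N m n (act N m n (g, h) T) = act N m n (g, h) (Cop N m n T)"
proof (intro ext)
  fix I J
  have "act N m n (g, h) (Cop N m n T) I J = act N m n (g, h) (Lop m T) I J + act N m n (g, h) (Rop n T) I J
      - act N m n (g, h) (Aop N m n T) I J + of_nat (N * n) * act N m n (g, h) T I J"
    unfolding Cop_def act_add[symmetric] act_diff[symmetric] act_scale[symmetric] by simp
  thus "Cop N m n (act N m n (g, h) T) I J = act N m n (g, h) (Cop N m n T) I J"
    unfolding Cop_def by (simp add: Lop_equiv Rop_equiv Aop_equiv[OF gh N])
qed

lemma Lop_add: "Lop m (\<lambda>I J. S I J + T I J) I J = Lop m S I J + Lop m T I J"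
  by (simp add: Lop_def sum.distrib)
lemma Rop_add: "Rop n (\<lambda>I J. S I J + T I J) I J = Rop n S I J + Rop n T I J"
  by (simp add: Rop_def sum.distrib)
lemma contr_add: "contr N m n a b (\<lambda>I J. S I J + T I J) I J = contr N m n a b S I J + contr N m n a b T I J"
  by (simp add: contr_def sum.distrib)
lemma Aop_add: "Aop N m n (\<lambda>I J. S I J + T I J) I J = Aop N m n S I J + Aop N m n T I J"
  by (simp add: Aop_def contr_add sum.distrib)
lemma Cop_add: "Cop N m n (\<lambda>I J. S I J + T I J) = (\<lambda>I J. Cop N m n S I J + Cop N m n T I J)"
  by (intro ext) (simp add: Cop_def Lop_add Rop_add Aop_add algebra_simps)

lemma Lop_scale: "Lop m (\<lambda>I J. c * T I J) I J = c * Lop m T I J"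
  by (simp add: Lop_def sum_distrib_left)
lemma Rop_scale: "Rop n (\<lambda>I J. c * T I J) I J = c * Rop n T I J"
  by (simp add: Rop_def sum_distrib_left)
lemma contr_scale: "contr N m n a b (\<lambda>I J. c * T I J) I J = c * contr N m n a b T I J"
  by (simp add: contr_def sum_distrib_left)
lemma Aop_scale: "Aop N m n (\<lambda>I J. c * T I J) I J = c * Aop N m n T I J"
  by (simp add: Aop_def contr_scale sum_distrib_left)
lemma Cop_scale: "Cop N m n (\<lambda>I J. c * T I J) = (\<lambda>I J. c * Cop N m n T I J)"
  by (intro ext) (simp add: Cop_def Lop_scale Rop_scale Aop_scale algebra_simps)

lemma Cop_zero: "Cop N m n (\<lambda>I J. 0) = (\<lambda>I J. 0)"
  by (intro ext) (simp add: Cop_def Lop_def Rop_def Aop_def contr_def cong: if_cong)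

lemma Lop_sum: "Lop m (\<lambda>I J. \<Sum>i\<in>S. F i I J) I J = (\<Sum>i\<in>S. Lop m (F i) I J)"
proof -
  have "Lop m (\<lambda>I J. \<Sum>i\<in>S. F i I J) I J = (\<Sum>b<m. \<Sum>i\<in>S. \<Sum>a<b. F i (swap_at I a b) J)"
    unfolding Lop_def by (rule sum.cong[OF refl], rule sum.swap)
  also have "\<dots> = (\<Sum>i\<in>S. Lop m (F i) I J)" unfolding Lop_def by (rule sum.swap)
  finally show ?thesis .
qed
lemma Rop_sum: "Rop n (\<lambda>I J. \<Sum>i\<in>S. F i I J) I J = (\<Sum>i\<in>S. Rop n (F i) I J)"
proof -
  have "Rop n (\<lambda>I J. \<Sum>i\<in>S. F i I J) I J = (\<Sum>b<n. \<Sum>i\<in>S. \<Sum>a<b. F i I (swap_at J a b))"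
    unfolding Rop_def by (rule sum.cong[OF refl], rule sum.swap)
  also have "\<dots> = (\<Sum>i\<in>S. Rop n (F i) I J)" unfolding Rop_def by (rule sum.swap)
  finally show ?thesis .
qed
lemma contr_sum: "contr N m n a b (\<lambda>I J. \<Sum>i\<in>S. F i I J) I J = (\<Sum>i\<in>S. contr N m n a b (F i) I J)"
proof (cases "I \<in> idx N m \<and> J \<in> idx N n \<and> I ! a = J ! b")
  case True show ?thesis unfolding contr_def if_P[OF True] by (rule sum.swap)
next
  case False
  show ?thesis unfolding contr_def if_not_P[OF False] by simp
qed
lemma Aop_sum: "Aop N m n (\<lambda>I J. \<Sum>i\<in>S. F i I J) I J = (\<Sum>i\<in>S. Aop N m n (F i) I J)"
proof -
  have "Aop N m n (\<lambda>I J. \<Sum>i\<in>S. F i I J) I J = (\<Sum>a<m. \<Sum>b<n. \<Sum>i\<in>S. contr N m n a b (F i) I J)"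
    unfolding Aop_def by (simp only: contr_sum)
  also have "\<dots> = (\<Sum>i\<in>S. \<Sum>a<m. \<Sum>b<n. contr N m n a b (F i) I J)"
    by (rule swap3[symmetric])
  finally show ?thesis unfolding Aop_def .
qed
lemma Cop_sum: "Cop N m n (\<lambda>I J. \<Sum>i\<in>S. F i I J) I J = (\<Sum>i\<in>S. Cop N m n (F i) I J)"
  by (simp add: Cop_def Lop_sum Rop_sum Aop_sum sum.distrib sum_subtractf sum_distrib_left)

lemma Cop_out:
  assumes T: "T \<in> tens N m n" and nI: "\<not> (I \<in> idx N m \<and> J \<in> idx N n)"
  shows "Cop N m n T I J = 0"
proof -
  have "T (swap_at I a b) J = 0" if "a < b" "b < m" for a b
    using T nI swap_at_idx_iff[of a m b I N] that by (auto simp: tens_def)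
  hence "Lop m T I J = 0" by (simp add: Lop_def)
  moreover have "T I (swap_at J a b) = 0" if "a < b" "b < n" for a b
    using T nI swap_at_idx_iff[of a n b J N] that by (auto simp: tens_def)
  hence "Rop n T I J = 0" by (simp add: Rop_def)
  moreover have "contr N m n a b T I J = 0" for a b using nI by (auto simp: contr_def)
  hence "Aop N m n T I J = 0" by (simp add: Aop_def)
  moreover have "T I J = 0" using T nI by (auto simp: tens_def)
  ultimately show ?thesis by (simp add: Cop_def)
qed

lemma Cop_hw:
  assumes hv: "hw_vector N m n (hw N \<mu> \<nu>) v" and vt: "v \<in> tens N m n"
    and len: "length \<mu> + length \<nu> \<le> N" and mr: "m = sum_list \<mu> + r" and nr: "n = sum_list \<nu> + r"
  shows "Cop N m n v = (\<lambda>I J. of_int (content \<mu> + content \<nu> + int N * int (sum_list \<nu>)) * v I J)"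
proof (intro ext)
  fix I J
  show "Cop N m n v I J = of_int (content \<mu> + content \<nu> + int N * int (sum_list \<nu>)) * v I J"
  proof (cases "I \<in> idx N m \<and> J \<in> idx N n")
    case False
    thus ?thesis using Cop_out[OF vt False] vt by (auto simp: tens_def)
  next
    case True
    hence I: "I \<in> idx N m" and J: "J \<in> idx N n" by auto
    define E where "E = 2 * content \<mu> + 2 * content \<nu> + int N * int (sum_list \<mu> + sum_list \<nu>)"
    have O1: "Omega N m n v I J = 2 * (Lop m v I J + Rop n v I J - Aop N m n v I J) + of_nat ((m + n) * N) * v I J"
      by (rule Omega_eq[OF I J])
    have O2: "Omega N m n v I J = of_int E * v I J"
      using Omega_hw[OF hv vt I J] comb[OF len] by (simp add: E_def)
    have int_id: "E - int ((m + n) * N) + 2 * int (N * n) = 2 * (content \<mu> + content \<nu> + int N * int (sum_list \<nu>))"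
      unfolding E_def mr nr by (simp add: algebra_simps)
    have "2 * Cop N m n v I J = 2 * (Lop m v I J + Rop n v I J - Aop N m n v I J) + 2 * of_nat (N * n) * v I J"
      by (simp add: Cop_def algebra_simps)
    also have "\<dots> = (of_int E - of_nat ((m + n) * N) + 2 * of_nat (N * n)) * v I J"
      using O1 O2 by (simp add: algebra_simps)
    also have "of_int E - of_nat ((m + n) * N) + 2 * of_nat (N * n) = (of_int (E - int ((m + n) * N) + 2 * int (N * n)) :: complex)"
      by simp
    also have "\<dots> = 2 * of_int (content \<mu> + content \<nu> + int N * int (sum_list \<nu>))"
      unfolding int_id by simp
    finally have h2: "2 * Cop N m n v I J = 2 * of_int (content \<mu> + content \<nu> + int N * int (sum_list \<nu>)) * v I J" .
    hence "2 * Cop N m n v I J = 2 * (of_int (content \<mu> + content \<nu> + int N * int (sum_list \<nu>)) * v I J)"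
      by (simp only: mult.assoc)
    thus ?thesis by (metis mult_left_cancel zero_neq_numeral)
  qed
qed

lemma W_eigen:
  assumes ot: "of_type N m n \<mu> \<nu> W" and N: "0 < N"
    and len: "length \<mu> + length \<nu> \<le> N" and mr: "m = sum_list \<mu> + r" and nr: "n = sum_list \<nu> + r"
    and T: "T \<in> W"
  shows "Cop N m n T = (\<lambda>I J. of_int (content \<mu> + content \<nu> + int N * int (sum_list \<nu>)) * T I J)"
proof -
  define c :: complex where "c = of_int (content \<mu> + content \<nu> + int N * int (sum_list \<nu>))"
  have irr: "irred_subrep N m n W" and ex: "\<exists>v\<in>W. hw_vector N m n (hw N \<mu> \<nu>) v"
    using ot by (auto simp: of_type_def)
  obtain v where vW: "v \<in> W" and hv: "hw_vector N m n (hw N \<mu> \<nu>) v" using ex by blast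
  have sr: "subrep N m n W" using irr by (simp add: irred_subrep_def)
  have sp: "subspace_t N m n W" and actW: "\<forall>gh\<in>GL N. \<forall>T\<in>W. act N m n gh T \<in> W"
    using sr by (auto simp: subrep_def)
  have Wt: "W \<subseteq> tens N m n" and W0: "(\<lambda>I J. 0) \<in> W"
    and Wadd: "\<forall>S\<in>W. \<forall>T\<in>W. (\<lambda>I J. S I J + T I J) \<in> W"
    and Wsc: "\<forall>c. \<forall>T\<in>W. (\<lambda>I J. c * T I J) \<in> W"
    using sp by (auto simp: subspace_t_def)
  define W' where "W' = {T\<in>W. Cop N m n T = (\<lambda>I J. c * T I J)}"
  have vW': "v \<in> W'"
    unfolding W'_def c_def using vW Cop_hw[OF hv _ len mr nr] Wt by auto
  have "subrep N m n W'"
    unfolding subrep_def subspace_t_def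
  proof (intro conjI ballI allI)
    show "W' \<subseteq> tens N m n" using Wt by (auto simp: W'_def)
    show "(\<lambda>I J. 0) \<in> W'" using W0 by (simp add: W'_def Cop_zero)
    show "(\<lambda>I J. S I J + T I J) \<in> W'" if "S \<in> W'" "T \<in> W'" for S T
      using that Wadd by (simp add: W'_def Cop_add algebra_simps)
    show "(\<lambda>I J. d * T I J) \<in> W'" if "T \<in> W'" for d T
      using that Wsc by (simp add: W'_def Cop_scale algebra_simps)
    show "act N m n gh T \<in> W'" if gh: "gh \<in> GL N" and T: "T \<in> W'" for gh T
    proof -
      obtain g h where ghp: "gh = (g, h)" by (cases gh)
      have "act N m n gh T \<in> W" using actW gh T by (auto simp: W'_def)
      moreover have "Cop N m n (act N m n gh T) = (\<lambda>I J. c * act N m n gh T I J)"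
      proof -
        have "Cop N m n (act N m n (g, h) T) = act N m n (g, h) (Cop N m n T)"
          using Cop_equiv[of g h N m n T] gh N ghp by simp
        also have "\<dots> = act N m n (g, h) (\<lambda>I J. c * T I J)" using T by (simp add: W'_def)
        also have "\<dots> = (\<lambda>I J. c * act N m n (g, h) T I J)" by (intro ext) (rule act_scale)
        finally show ?thesis using ghp by simp
      qed
      ultimately show ?thesis by (simp add: W'_def)
    qed
  qed
  moreover have "W' \<subseteq> W" by (auto simp: W'_def)
  ultimately have "W' = {\<lambda>I J. 0} \<or> W' = W" using irr by (auto simp: irred_subrep_def)
  moreover have "W' \<noteq> {\<lambda>I J. 0}" using vW' hv by (auto simp: hw_vector_def)
  ultimately have "W' = W" by blast
  thus ?thesis using T by (auto simp: W'_def c_def)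
qed

theorem proposition2p6:
  fixes m n N :: nat and \<mu> \<nu> :: "nat list" and T :: tensor
  assumes "m \<ge> 1" and "n \<ge> 1" and "N \<ge> 1"
    and "(\<mu>, \<nu>) \<in> Lambda m n N"
    and "T \<in> isotypic N m n \<mu> \<nu>"
  shows "Cop N m n T =
    (\<lambda>I J. of_int (content \<mu> + content \<nu> + int N * int (sum_list \<nu>)) * T I J)"
proof -
  obtain r where mr: "m = sum_list \<mu> + r" and nr: "n = sum_list \<nu> + r" and len: "length \<mu> + length \<nu> \<le> N"
    using assms(4) by (auto simp: Lambda_def)
  have N: "0 < N" using assms(3) by simp
  have "\<exists>(k::nat) Ts. (\<forall>i<k. \<exists>W. of_type N m n \<mu> \<nu> W \<and> Ts i \<in> W) \<and> T = (\<lambda>I J. \<Sum>i<k. Ts i I J)"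
    using assms(5) unfolding isotypic_def mem_Collect_eq .
  then obtain k :: nat and Ts where Ts: "\<forall>i<k. \<exists>W. of_type N m n \<mu> \<nu> W \<and> Ts i \<in> W" and TT: "T = (\<lambda>I J. \<Sum>i<k. Ts i I J)"
    by blast
  have e: "Cop N m n (Ts i) = (\<lambda>I J. of_int (content \<mu> + content \<nu> + int N * int (sum_list \<nu>)) * Ts i I J)" if "i < k" for i
    using Ts that W_eigen[OF _ N len mr nr] by blast
  show ?thesis
  proof (intro ext)
    fix I J
    have "Cop N m n T I J = (\<Sum>i<k. Cop N m n (Ts i) I J)" unfolding TT by (rule Cop_sum)
    also have "\<dots> = (\<Sum>i<k. of_int (content \<mu> + content \<nu> + int N * int (sum_list \<nu>)) * Ts i I J)"
      by (intro sum.cong refl) (simp add: e)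
    also have "\<dots> = of_int (content \<mu> + content \<nu> + int N * int (sum_list \<nu>)) * T I J"
      unfolding TT by (simp add: sum_distrib_left)
    finally show "Cop N m n T I J = of_int (content \<mu> + content \<nu> + int N * int (sum_list \<nu>)) * T I J" .
  qed
qed

end
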